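(* There is a deterministic distributed algorithm for the synchronous network model (with a leader and messages of $O(\log n)$ bits) which, on every connected graph $G=(V,E)$ with $n=|V|$ and $m=|E|$, terminates with every node storing a label such that two nodes store the same label if and only if they lie in the same edge-biconnected component of $G$ (so an edge is a bridge if and only if its endpoints store different labels). The algorithm runs in $O(\mathrm{Diam}(G))$ time and sends $O(m)$ messages in total.
   Context: Network model: $G=(V,E)$ is a connected undirected graph whose nodes are processors and whose edges are reliable two-way communication links. Each node initially knows only its own identity and its incident links. The network is synchronous (computation proceeds in rounds; in each round every node may send one message over each incident link, and the messages are received before the next round). One node is initially distinguished as the leader. Every message has $O(\log n)$ bits. The time complexity is the number of rounds until termination, and the message complexity is the total number of messages sent. $\mathrm{Diam}(G)$ is the maximum distance between two vertices of $G$. Edge-biconnectivity: define $x\sim y$ for $x,y\in V$ if for every edge $e\in E$, $x$ and $y$ are connected by a path in $G-e$. This is an equivalence relation, and its equivalence classes are the edge-biconnected components. An edge is a bridge if its deletion disconnects $G$. *)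

theory Defs
  imports Main
begin

definition simple_graph :: "nat set \<Rightarrow> nat set set \<Rightarrow> bool" where
  "simple_graph V E \<longleftrightarrow> finite V \<and>
     (\<forall>e\<in>E. \<exists>u v. e = {u, v} \<and> u \<noteq> v \<and> u \<in> V \<and> v \<in> V)"

definition adj :: "nat set set \<Rightarrow> (nat \<times> nat) set" where
  "adj E = {(u, v). {u, v} \<in> E}"

definition nbrs :: "nat set set \<Rightarrow> nat \<Rightarrow> nat set" where
  "nbrs E v = {u. {u, v} \<in> E}"

definition connected_graph :: "nat set \<Rightarrow> nat set set \<Rightarrow> bool" where
  "connected_graph V E \<longleftrightarrow> (\<forall>u\<in>V. \<forall>v\<in>V. (u, v) \<in> (adj E)\<^sup>*)"

definition edge_biconn :: "nat set \<Rightarrow> nat set set \<Rightarrow> nat \<Rightarrow> nat \<Rightarrow> bool" where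
  "edge_biconn V E x y \<longleftrightarrow> x \<in> V \<and> y \<in> V \<and>
     (\<forall>e\<in>E. (x, y) \<in> (adj (E - {e}))\<^sup>*)"

definition dist :: "nat set set \<Rightarrow> nat \<Rightarrow> nat \<Rightarrow> nat" where
  "dist E u v = (LEAST k. (u, v) \<in> adj E ^^ k)"

definition diam :: "nat set \<Rightarrow> nat set set \<Rightarrow> nat" where
  "diam V E = Max {dist E u v | u v. u \<in> V \<and> v \<in> V}"

text \<open>A deterministic algorithm: local states are encoded as nat lists.
 init: own identity, identities of the endpoints of incident links, leader flag.
 msg s u: message (if any) sent over the link to neighbour u in the current round.
 trans s r: new state, given r u = message received from neighbour u.
 halted s: node has terminated; out s: label stored by the node.\<close>

record alg =
  init :: "nat \<Rightarrow> nat set \<Rightarrow> bool \<Rightarrow> nat list"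
  msg :: "nat list \<Rightarrow> nat \<Rightarrow> nat option"
  trans :: "nat list \<Rightarrow> (nat \<Rightarrow> nat option) \<Rightarrow> nat list"
  halted :: "nat list \<Rightarrow> bool"
  out :: "nat list \<Rightarrow> nat"

primrec run :: "alg \<Rightarrow> nat set set \<Rightarrow> nat \<Rightarrow> nat \<Rightarrow> nat \<Rightarrow> nat list" where
  "run A E l 0 = (\<lambda>v. init A v (nbrs E v) (v = l))"
| "run A E l (Suc t) = (let S = run A E l t in
     (\<lambda>v. if halted A (S v) then S v
          else trans A (S v)
                 (\<lambda>u. if u \<in> nbrs E v \<and> \<not> halted A (S u) then msg A (S u) v else None)))"

text \<open>Message sent by v to u in round t+1 (computed from states after t rounds).\<close>
definition sent :: "alg \<Rightarrow> nat set set \<Rightarrow> nat \<Rightarrow> nat \<Rightarrow> nat \<Rightarrow> nat \<Rightarrow> nat option" where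
  "sent A E l t v u = (if {u, v} \<in> E \<and> \<not> halted A (run A E l t v)
                        then msg A (run A E l t v) u else None)"

definition msgs_in_round :: "alg \<Rightarrow> nat set set \<Rightarrow> nat \<Rightarrow> nat \<Rightarrow> nat" where
  "msgs_in_round A E l t = card {(v, u). sent A E l t v u \<noteq> None}"

end

theory Submission
  imports Defs "HOL-Library.Countable" "HOL-Library.Nat_Bijection"
begin

locale G =
  fixes V :: "nat set" and E :: "nat set set" and l :: nat
  assumes sg: "simple_graph V E" and ne: "V \<noteq> {}" and conn: "connected_graph V E" and lV: "l \<in> V"
begin

lemma finV: "finite V" using sg by (simp add: simple_graph_def)

lemma edgeE: "e \<in> E \<Longrightarrow> \<exists>u v. e = {u,v} \<and> u \<noteq> v \<and> u \<in> V \<and> v \<in> V"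
  using sg by (simp add: simple_graph_def)

lemma nbrsD: "y \<in> nbrs E x \<Longrightarrow> y \<in> V \<and> x \<in> V \<and> y \<noteq> x"
proof -
  assume "y \<in> nbrs E x"
  then have "{y,x} \<in> E" by (simp add: nbrs_def)
  then obtain u v where "{y,x} = {u,v}" "u \<noteq> v" "u \<in> V" "v \<in> V" using edgeE by blast
  then show ?thesis by (metis doubleton_eq_iff insert_absorb2 singleton_insert_inj_eq)
qed

lemma nbrs_sym: "y \<in> nbrs E x \<longleftrightarrow> x \<in> nbrs E y"
  by (simp add: nbrs_def insert_commute)

lemma nbrs_iff: "y \<in> nbrs E x \<longleftrightarrow> {y,x} \<in> E" by (simp add: nbrs_def)

lemma fin_nbrs: "finite (nbrs E x)"
  by (rule finite_subset[OF _ finV]) (auto dest: nbrsD)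

lemma finE: "finite E"
proof -
  have "E \<subseteq> Pow V" using edgeE by blast
  then show ?thesis using finV by (meson finite_Pow_iff finite_subset)
qed

definition dep :: "nat \<Rightarrow> nat" where "dep v = dist E l v"

lemma adj_iff: "(u,v) \<in> adj E \<longleftrightarrow> {u,v} \<in> E" by (simp add: adj_def)

lemma dep_reach: "v \<in> V \<Longrightarrow> (l,v) \<in> adj E ^^ dep v"
proof -
  assume "v \<in> V"
  then have "(l,v) \<in> (adj E)\<^sup>*" using conn lV by (simp add: connected_graph_def)
  then obtain n where "(l,v) \<in> adj E ^^ n" using rtrancl_power by blast
  then show ?thesis unfolding dep_def dist_def by (rule LeastI)
qed

lemma dep_le: "(l,v) \<in> adj E ^^ k \<Longrightarrow> dep v \<le> k"
  unfolding dep_def dist_def by (rule Least_le)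

lemma dep_nbr: "y \<in> nbrs E x \<Longrightarrow> dep y \<le> dep x + 1"
proof -
  assume a: "y \<in> nbrs E x"
  then have "x \<in> V" by (auto dest: nbrsD)
  then have "(l,x) \<in> adj E ^^ dep x" by (rule dep_reach)
  moreover have "(x,y) \<in> adj E" using a by (simp add: adj_iff nbrs_def insert_commute)
  ultimately have "(l,y) \<in> adj E ^^ Suc (dep x)" by (rule relpow_Suc_I)
  then show ?thesis using dep_le by fastforce
qed

lemma dep_l: "dep l = 0"
proof -
  have "(l,l) \<in> adj E ^^ 0" by simp
  then show ?thesis using dep_le by fastforce
qed

lemma dep0: "v \<in> V \<Longrightarrow> dep v = 0 \<longleftrightarrow> v = l"
  using dep_reach[of v] dep_l by auto

lemma dep_par_ex: "v \<in> V \<Longrightarrow> v \<noteq> l \<Longrightarrow> \<exists>x. {x,v} \<in> E \<and> dep x + 1 = dep v"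
proof -
  assume v: "v \<in> V" "v \<noteq> l"
  then obtain k where k: "dep v = Suc k" using dep0 by (cases "dep v") auto
  have "(l,v) \<in> adj E ^^ Suc k" using dep_reach[OF v(1)] k by simp
  then obtain x where x: "(l,x) \<in> adj E ^^ k" "(x,v) \<in> adj E" by (rule relpow_Suc_E)
  have e: "{x,v} \<in> E" using x(2) by (simp add: adj_iff)
  have "dep x \<le> k" using x(1) by (rule dep_le)
  moreover have "dep v \<le> dep x + 1" using e by (intro dep_nbr) (simp add: nbrs_def insert_commute)
  ultimately show ?thesis using e k by (intro exI[of _ x]) auto
qed

definition par :: "nat \<Rightarrow> nat" where
  "par v = (if v = l then l else LEAST x. {x,v} \<in> E \<and> dep x + 1 = dep v)"

lemma par: "v \<in> V \<Longrightarrow> v \<noteq> l \<Longrightarrow> {par v, v} \<in> E \<and> dep (par v) + 1 = dep v"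
proof -
  assume "v \<in> V" "v \<noteq> l"
  then obtain x where "{x,v} \<in> E \<and> dep x + 1 = dep v" using dep_par_ex by blast
  then have "{LEAST x. {x,v} \<in> E \<and> dep x + 1 = dep v, v} \<in> E \<and> dep (LEAST x. {x,v} \<in> E \<and> dep x + 1 = dep v) + 1 = dep v"
    by (rule LeastI)
  then show ?thesis using \<open>v \<noteq> l\<close> by (simp add: par_def)
qed

lemma par_least: "v \<noteq> l \<Longrightarrow> {x,v} \<in> E \<Longrightarrow> dep x + 1 = dep v \<Longrightarrow> par v \<le> x"
  unfolding par_def by (auto intro: Least_le)

lemma par_l[simp]: "par l = l" by (simp add: par_def)

lemma par_nbr: "v \<in> V \<Longrightarrow> v \<noteq> l \<Longrightarrow> par v \<in> nbrs E v"
  using par by (simp add: nbrs_def)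

lemma parV: "v \<in> V \<Longrightarrow> par v \<in> V"
  using par_nbr nbrsD lV by (cases "v = l") auto

lemma dep_par: "v \<in> V \<Longrightarrow> v \<noteq> l \<Longrightarrow> dep (par v) + 1 = dep v"
  using par by blast

lemma pw_V: "x \<in> V \<Longrightarrow> (par ^^ k) x \<in> V"
  by (induct k) (auto intro: parV)

lemma pw_l[simp]: "(par ^^ k) l = l"
  by (induct k) auto

lemma pw_dep: "x \<in> V \<Longrightarrow> dep ((par ^^ k) x) = dep x - k"
proof (induct k)
  case 0 then show ?case by simp
next
  case (Suc k)
  let ?y = "(par ^^ k) x"
  have yV: "?y \<in> V" using Suc pw_V by blast
  show ?case
  proof (cases "?y = l")
    case True then show ?thesis using Suc dep_l by simp
  next
    case False then show ?thesis using Suc dep_par[OF yV] by simp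
  qed
qed

lemma pw_root: "x \<in> V \<Longrightarrow> (par ^^ dep x) x = l"
  using pw_dep[of x "dep x"] pw_V[of x "dep x"] dep0 by auto

lemma pw_add: "(par ^^ (i + j)) x = (par ^^ i) ((par ^^ j) x)"
  by (simp add: funpow_add)

lemma pw_dep_eq: "x \<in> V \<Longrightarrow> (par ^^ k) x = c \<Longrightarrow> c \<noteq> l \<Longrightarrow> dep c + k = dep x"
proof -
  assume a: "x \<in> V" "(par ^^ k) x = c" "c \<noteq> l"
  have "k \<le> dep x"
  proof (rule ccontr)
    assume "\<not> k \<le> dep x"
    then have "k = (k - dep x) + dep x" by simp
    then have "(par ^^ k) x = (par ^^ (k - dep x)) ((par ^^ dep x) x)" by (metis pw_add)
    then show False using a pw_root by simp
  qed
  then show ?thesis using pw_dep[OF a(1), of k] a by simp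
qed

lemma pw_chain: "(par ^^ i) x = a \<Longrightarrow> (par ^^ j) x = b \<Longrightarrow> i \<le> j \<Longrightarrow> (par ^^ (j - i)) a = b"
  by (metis le_add_diff_inverse2 pw_add)

lemma dep_le_card: "x \<in> V \<Longrightarrow> dep x < card V"
proof -
  assume x: "x \<in> V"
  have inj: "inj_on (\<lambda>j. (par ^^ j) x) {..dep x}"
  proof (rule inj_onI)
    fix i j assume "i \<in> {..dep x}" "j \<in> {..dep x}" "(par ^^ i) x = (par ^^ j) x"
    then show "i = j" using pw_dep[OF x, of i] pw_dep[OF x, of j] by auto
  qed
  have "(\<lambda>j. (par ^^ j) x) ` {..dep x} \<subseteq> V" using pw_V[OF x] by auto
  then have "card ((\<lambda>j. (par ^^ j) x) ` {..dep x}) \<le> card V" using finV by (rule card_mono[rotated])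
  then show ?thesis using card_image[OF inj] by simp
qed

definition sub :: "nat \<Rightarrow> nat set" where "sub a = {x \<in> V. \<exists>k. (par ^^ k) x = a}"
definition children :: "nat \<Rightarrow> nat set" where "children a = {c \<in> V. c \<noteq> l \<and> par c = a}"

lemma sub_V: "sub a \<subseteq> V" by (auto simp: sub_def)
lemma fin_sub: "finite (sub a)" using finV sub_V finite_subset by blast
lemma fin_children: "finite (children a)"
  by (rule finite_subset[OF _ finV]) (auto simp: children_def)

lemma self_sub: "a \<in> V \<Longrightarrow> a \<in> sub a"
  unfolding sub_def by (auto intro: exI[of _ 0])

lemma sub_l: "sub l = V"
  unfolding sub_def using pw_root by blast

lemma childrenD: "c \<in> children a \<Longrightarrow> c \<in> V \<and> c \<noteq> l \<and> par c = a \<and> a \<in> V \<and> c \<in> nbrs E a \<and> dep c = dep a + 1"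
  unfolding children_def using parV par_nbr dep_par nbrs_sym by auto

lemma sub_par: "y \<in> sub a \<Longrightarrow> y \<noteq> a \<Longrightarrow> par y \<in> sub a"
proof -
  assume "y \<in> sub a" "y \<noteq> a"
  then obtain k where k: "y \<in> V" "(par ^^ k) y = a" by (auto simp: sub_def)
  with \<open>y \<noteq> a\<close> obtain j where "k = Suc j" by (cases k) auto
  then have "(par ^^ j) (par y) = a" using k by (simp add: funpow_Suc_right del: funpow.simps)
  then show ?thesis using parV k by (auto simp: sub_def)
qed

lemma sub_decomp: "a \<in> V \<Longrightarrow> sub a = insert a (\<Union>c \<in> children a. sub c)"
proof (rule set_eqI, rule iffI)
  fix x assume a: "a \<in> V" and x: "x \<in> sub a"
  then have xV: "x \<in> V" and ex: "\<exists>k. (par ^^ k) x = a" by (auto simp: sub_def)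
  define k where "k = (LEAST k. (par ^^ k) x = a)"
  have k: "(par ^^ k) x = a" unfolding k_def using ex by (rule LeastI_ex)
  show "x \<in> insert a (\<Union>c \<in> children a. sub c)"
  proof (cases k)
    case 0 then show ?thesis using k by simp
  next
    case (Suc j)
    let ?c = "(par ^^ j) x"
    have "?c \<noteq> a" using Suc k_def not_less_Least[of j "\<lambda>k. (par ^^ k) x = a"] by auto
    moreover have pc: "par ?c = a" using k Suc by simp
    ultimately have "?c \<noteq> l" by auto
    then have "?c \<in> children a" using pc pw_V[OF xV] by (auto simp: children_def)
    moreover have "x \<in> sub ?c" using xV by (auto simp: sub_def)
    ultimately show ?thesis by blast
  qed
next
  fix x assume a: "a \<in> V" and x: "x \<in> insert a (\<Union>c \<in> children a. sub c)"
  show "x \<in> sub a"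
  proof (cases "x = a")
    case True then show ?thesis using a self_sub by simp
  next
    case False
    then obtain c k where c: "c \<in> children a" "x \<in> V" "(par ^^ k) x = c" using x by (auto simp: sub_def)
    then have "(par ^^ (Suc k)) x = a" by (simp add: children_def)
    then show ?thesis using c(2) unfolding sub_def by blast
  qed
qed

lemma sub_dep: "x \<in> sub a \<Longrightarrow> a \<noteq> l \<Longrightarrow> dep a \<le> dep x"
  unfolding sub_def using pw_dep_eq by fastforce

lemma sub_disj: "c1 \<in> children a \<Longrightarrow> c2 \<in> children a \<Longrightarrow> c1 \<noteq> c2 \<Longrightarrow> sub c1 \<inter> sub c2 = {}"
proof (rule ccontr)
  assume c: "c1 \<in> children a" "c2 \<in> children a" "c1 \<noteq> c2" "sub c1 \<inter> sub c2 \<noteq> {}"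
  then obtain x i j where x: "x \<in> V" "(par ^^ i) x = c1" "(par ^^ j) x = c2" by (auto simp: sub_def)
  have "dep c1 + i = dep x" "dep c2 + j = dep x" using pw_dep_eq x c childrenD by blast+
  moreover have "dep c1 = dep c2" using c childrenD by simp
  ultimately have "i = j" by simp
  then show False using x c by simp
qed

lemma notin_sub_child: "c \<in> children a \<Longrightarrow> a \<notin> sub c"
  using sub_dep childrenD by fastforce

lemma sub_mono_child: "c \<in> children a \<Longrightarrow> sub c \<subseteq> sub a"
  using sub_decomp childrenD by blast

definition size :: "nat \<Rightarrow> nat" where "size a = card (sub a)"

lemma size_rec: "a \<in> V \<Longrightarrow> size a = 1 + (\<Sum>c\<in>children a. size c)"
proof -
  assume a: "a \<in> V"
  have "card (\<Union>c \<in> children a. sub c) = (\<Sum>c\<in>children a. card (sub c))"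
    by (rule card_UN_disjoint) (auto simp: fin_children fin_sub dest: sub_disj)
  moreover have "a \<notin> (\<Union>c \<in> children a. sub c)" using notin_sub_child by blast
  moreover have "finite (\<Union>c \<in> children a. sub c)" using fin_children fin_sub by blast
  ultimately show ?thesis unfolding size_def by (subst sub_decomp[OF a]) simp
qed

definition md :: "nat \<Rightarrow> nat" where "md a = Max (dep ` sub a)"
definition Dm :: nat where "Dm = Max (dep ` V)"

lemma dep_le_Dm: "x \<in> V \<Longrightarrow> dep x \<le> Dm"
  unfolding Dm_def using finV by simp

lemma md_ge: "a \<in> V \<Longrightarrow> dep a \<le> md a"
  unfolding md_def using fin_sub self_sub by simp

lemma md_le_Dm: "a \<in> V \<Longrightarrow> md a \<le> Dm"
  unfolding md_def using fin_sub self_sub sub_V dep_le_Dm by (subst Max_le_iff) blast+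

lemma md_l: "md l = Dm" by (simp add: md_def Dm_def sub_l)

lemma md_child: "c \<in> children a \<Longrightarrow> md c \<le> md a"
proof -
  assume c: "c \<in> children a"
  then have "c \<in> sub c" using self_sub childrenD by blast
  then show ?thesis unfolding md_def using fin_sub sub_mono_child[OF c]
    by (intro Max_mono) auto
qed

lemma md_cases: "a \<in> V \<Longrightarrow> md a = dep a \<or> (\<exists>c\<in>children a. md a = md c)"
proof -
  assume a: "a \<in> V"
  have "md a \<in> dep ` sub a" unfolding md_def using fin_sub self_sub[OF a] by (intro Max_in) auto
  then obtain x where x: "x \<in> sub a" "md a = dep x" by auto
  show ?thesis
  proof (cases "x = a")
    case True then show ?thesis using x by simp
  next
    case False
    then obtain c where c: "c \<in> children a" "x \<in> sub c" using x sub_decomp[OF a] by auto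
    have "dep x \<le> md c" unfolding md_def using c fin_sub by simp
    then show ?thesis using md_child[OF c(1)] x c by force
  qed
qed

lemma md_Max: "a \<in> V \<Longrightarrow> Max (insert (dep a) (md ` children a)) = md a"
proof -
  assume a: "a \<in> V"
  show ?thesis
  proof (rule Max_eqI)
    show "finite (insert (dep a) (md ` children a))" using fin_children by simp
    show "y \<le> md a" if "y \<in> insert (dep a) (md ` children a)" for y
      using that md_ge[OF a] md_child by auto
    show "md a \<in> insert (dep a) (md ` children a)" using md_cases[OF a] by auto
  qed
qed

definition su :: "nat \<Rightarrow> nat" where "su a = 2 * md a - dep a + 2"

lemma su_ready: "a \<in> V \<Longrightarrow> (su a \<le> t \<longleftrightarrow> dep a + 2 \<le> t \<and> (\<forall>c\<in>children a. su c < t))"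
proof -
  assume a: "a \<in> V"
  have mc: "\<And>c. c \<in> children a \<Longrightarrow> dep a + 1 \<le> md c \<and> md c \<le> md a"
    using md_child childrenD md_ge by fastforce
  show ?thesis
  proof
    assume "su a \<le> t"
    then show "dep a + 2 \<le> t \<and> (\<forall>c\<in>children a. su c < t)"
      using md_ge[OF a] mc childrenD unfolding su_def by fastforce
  next
    assume h: "dep a + 2 \<le> t \<and> (\<forall>c\<in>children a. su c < t)"
    show "su a \<le> t"
    proof (cases "md a = dep a")
      case True then show ?thesis using h unfolding su_def by simp
    next
      case False
      then obtain c where c: "c \<in> children a" "md a = md c" using md_cases[OF a] by auto
      then show ?thesis using h mc[OF c(1)] childrenD[OF c(1)] unfolding su_def by fastforce
    qed
  qed
qed

lemma su_l: "su l = 2 * Dm + 2" by (simp add: su_def md_l dep_l)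

lemma su_ge: "a \<in> V \<Longrightarrow> dep a + 2 \<le> su a" using md_ge unfolding su_def by fastforce
lemma su_le: "a \<in> V \<Longrightarrow> su a \<le> 2 * Dm - dep a + 2" using md_le_Dm md_ge unfolding su_def by fastforce


primrec preF :: "nat \<Rightarrow> nat \<Rightarrow> nat" where
  "preF 0 x = 0"
| "preF (Suc k) x = preF k (par x) + 1 + (\<Sum>c\<in>{c \<in> children (par x). c < x}. size c)"

definition pre :: "nat \<Rightarrow> nat" where "pre x = preF (dep x) x"

lemma pre_l: "pre l = 0" by (simp add: pre_def dep_l)

lemma pre_rec: "c \<in> V \<Longrightarrow> c \<noteq> l \<Longrightarrow> pre c = pre (par c) + 1 + (\<Sum>c'\<in>{c' \<in> children (par c). c' < c}. size c')"
proof -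
  assume c: "c \<in> V" "c \<noteq> l"
  then have "dep c = Suc (dep (par c))" using dep_par by simp
  then show ?thesis by (simp add: pre_def)
qed

lemma intervals:
  fixes g :: "nat \<Rightarrow> nat"
  assumes "finite C"
  shows "(\<Union>c\<in>C. {b + (\<Sum>c'\<in>{c'\<in>C. c' < c}. g c') ..< b + (\<Sum>c'\<in>{c'\<in>C. c' < c}. g c') + g c}) = {b ..< b + sum g C}"
  using assms
proof (induct C rule: finite_linorder_max_induct)
  case empty then show ?case by simp
next
  case (insert m A)
  have eq1: "\<And>c. c \<in> A \<Longrightarrow> {c'\<in>insert m A. c' < c} = {c'\<in>A. c' < c}" using insert by auto
  have eq2: "{c'\<in>insert m A. c' < m} = A" using insert by auto
  have mA: "m \<notin> A" using insert by auto
  have "(\<Union>c\<in>insert m A. {b + (\<Sum>c'\<in>{c'\<in>insert m A. c' < c}. g c') ..< b + (\<Sum>c'\<in>{c'\<in>insert m A. c' < c}. g c') + g c})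
      = {b + sum g A ..< b + sum g A + g m} \<union> (\<Union>c\<in>A. {b + (\<Sum>c'\<in>{c'\<in>A. c' < c}. g c') ..< b + (\<Sum>c'\<in>{c'\<in>A. c' < c}. g c') + g c})"
    using eq1 eq2 by auto
  also have "\<dots> = {b ..< b + sum g (insert m A)}" using insert mA by auto
  finally show ?case .
qed

lemma pre_img: "a \<in> V \<Longrightarrow> pre ` sub a = {pre a ..< pre a + size a}"
proof (induction "Dm - dep a" arbitrary: a rule: less_induct)
  case less
  have IH: "pre ` sub c = {pre c ..< pre c + size c}" if c: "c \<in> children a" for c
  proof -
    have "c \<in> V" "dep c = dep a + 1" using childrenD[OF c] by auto
    moreover have "dep c \<le> Dm" using childrenD[OF c] dep_le_Dm by blast
    ultimately show ?thesis using less by simp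
  qed
  let ?S = "\<lambda>c. (\<Sum>c'\<in>{c'\<in>children a. c' < c}. size c')"
  have pc: "pre c = pre a + 1 + ?S c" if "c \<in> children a" for c
    using pre_rec childrenD[OF that] by auto
  have "pre ` sub a = insert (pre a) (\<Union>c\<in>children a. pre ` sub c)"
    by (subst sub_decomp[OF less.prems]) auto
  also have "\<dots> = insert (pre a) (\<Union>c\<in>children a. {pre a + 1 + ?S c ..< pre a + 1 + ?S c + size c})"
    using IH pc by auto
  also have "\<dots> = insert (pre a) {pre a + 1 ..< pre a + 1 + sum size (children a)}"
    using intervals[OF fin_children, of "pre a + 1" size a] by simp
  also have "\<dots> = {pre a ..< pre a + size a}"
    using size_rec[OF less.prems] by auto
  finally show ?case .
qed

lemma size_l: "size l = card V" by (simp add: size_def sub_l)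

lemma pre_V: "pre ` V = {..< card V}"
  using pre_img[OF lV] by (simp add: sub_l pre_l size_l lessThan_atLeast0)

lemma pre_inj: "inj_on pre V"
  using pre_V finV by (simp add: eq_card_imp_inj_on)

lemma pre_lt: "y \<in> V \<Longrightarrow> pre y < card V"
  using pre_V by auto

lemma sub_iff_pre: "a \<in> V \<Longrightarrow> y \<in> V \<Longrightarrow> y \<in> sub a \<longleftrightarrow> pre a \<le> pre y \<and> pre y < pre a + size a"
proof
  assume a: "a \<in> V" and y: "y \<in> V"
  show "y \<in> sub a \<Longrightarrow> pre a \<le> pre y \<and> pre y < pre a + size a" using pre_img[OF a] by auto
  assume "pre a \<le> pre y \<and> pre y < pre a + size a"
  then have "pre y \<in> pre ` sub a" using pre_img[OF a] by auto
  then obtain z where z: "z \<in> sub a" "pre z = pre y" by auto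
  then have "z = y" using pre_inj y sub_V by (auto dest: inj_onD)
  then show "y \<in> sub a" using z by simp
qed



end

context G begin
definition FF :: "nat \<Rightarrow> nat set" where "FF y = pre ` insert y (nbrs E y - {par y})"
definition low :: "nat \<Rightarrow> nat" where "low a = Min (\<Union>y\<in>sub a. FF y)"
definition high :: "nat \<Rightarrow> nat" where "high a = Max (\<Union>y\<in>sub a. FF y)"
definition bridge :: "nat \<Rightarrow> bool" where "bridge a \<longleftrightarrow> pre a \<le> low a \<and> high a < pre a + size a"

lemma fin_FF: "finite (FF y)" using fin_nbrs by (simp add: FF_def)
lemma fin_UFF: "finite (\<Union>y\<in>sub a. FF y)" using fin_FF fin_sub by blast
lemma ne_UFF: "a \<in> V \<Longrightarrow> (\<Union>y\<in>sub a. FF y) \<noteq> {}" using self_sub by (auto simp: FF_def)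

lemma bridge_pre: "a \<in> V \<Longrightarrow> bridge a \<longleftrightarrow> (\<forall>y\<in>sub a. \<forall>z \<in> insert y (nbrs E y - {par y}). pre a \<le> pre z \<and> pre z < pre a + size a)"
  unfolding bridge_def low_def high_def using fin_UFF ne_UFF
  by (auto simp: Min_ge_iff Max_less_iff FF_def)

lemma edge_V: "{y,z} \<in> E \<Longrightarrow> y \<in> V \<and> z \<in> V \<and> y \<noteq> z"
  using nbrsD[of y z] by (simp add: nbrs_def)

lemma bridge_sub: "a \<in> V \<Longrightarrow> bridge a \<longleftrightarrow> (\<forall>y\<in>sub a. \<forall>z \<in> nbrs E y - {par y}. z \<in> sub a)"
proof -
  assume a: "a \<in> V"
  have zV: "z \<in> V" if "y \<in> sub a" "z \<in> insert y (nbrs E y - {par y})" for y z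
    using that sub_V nbrsD by blast
  have "(\<forall>y\<in>sub a. \<forall>z \<in> insert y (nbrs E y - {par y}). pre a \<le> pre z \<and> pre z < pre a + size a)
     \<longleftrightarrow> (\<forall>y\<in>sub a. \<forall>z \<in> insert y (nbrs E y - {par y}). z \<in> sub a)"
  proof
    assume h: "\<forall>y\<in>sub a. \<forall>z \<in> insert y (nbrs E y - {par y}). pre a \<le> pre z \<and> pre z < pre a + size a"
    show "\<forall>y\<in>sub a. \<forall>z \<in> insert y (nbrs E y - {par y}). z \<in> sub a"
    proof (intro ballI)
      fix y z assume "y \<in> sub a" "z \<in> insert y (nbrs E y - {par y})"
      then show "z \<in> sub a" using h zV sub_iff_pre[OF a] by blast
    qed
  next
    assume h: "\<forall>y\<in>sub a. \<forall>z \<in> insert y (nbrs E y - {par y}). z \<in> sub a"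
    show "\<forall>y\<in>sub a. \<forall>z \<in> insert y (nbrs E y - {par y}). pre a \<le> pre z \<and> pre z < pre a + size a"
    proof (intro ballI)
      fix y z assume "y \<in> sub a" "z \<in> insert y (nbrs E y - {par y})"
      then show "pre a \<le> pre z \<and> pre z < pre a + size a" using h zV sub_iff_pre[OF a] by blast
    qed
  qed
  also have "\<dots> \<longleftrightarrow> (\<forall>y\<in>sub a. \<forall>z \<in> nbrs E y - {par y}. z \<in> sub a)" by auto
  finally show ?thesis using bridge_pre[OF a] by simp
qed

lemma bridge_iff: "a \<in> V \<Longrightarrow> a \<noteq> l \<Longrightarrow> bridge a \<longleftrightarrow> (\<forall>y z. {y,z} \<in> E \<and> {y,z} \<noteq> {par a, a} \<and> y \<in> sub a \<longrightarrow> z \<in> sub a)"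
proof -
  assume a: "a \<in> V" "a \<noteq> l"
  show ?thesis
  proof
    assume b: "bridge a"
    show "\<forall>y z. {y,z} \<in> E \<and> {y,z} \<noteq> {par a, a} \<and> y \<in> sub a \<longrightarrow> z \<in> sub a"
    proof (intro allI impI)
      fix y z assume h: "{y,z} \<in> E \<and> {y,z} \<noteq> {par a, a} \<and> y \<in> sub a"
      show "z \<in> sub a"
      proof (cases "z = par y")
        case True
        then have "y \<noteq> a" using h by (auto simp: insert_commute)
        then show ?thesis using True h sub_par by blast
      next
        case False
        then have "z \<in> nbrs E y - {par y}" using h by (simp add: nbrs_def insert_commute)
        then show ?thesis using b bridge_sub[OF a(1)] h by blast
      qed
    qed
  next
    assume h: "\<forall>y z. {y,z} \<in> E \<and> {y,z} \<noteq> {par a, a} \<and> y \<in> sub a \<longrightarrow> z \<in> sub a"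
    have "\<forall>y\<in>sub a. \<forall>z \<in> nbrs E y - {par y}. z \<in> sub a"
    proof (intro ballI)
      fix y z assume y: "y \<in> sub a" and z: "z \<in> nbrs E y - {par y}"
      then have e: "{y,z} \<in> E" by (simp add: nbrs_def insert_commute)
      show "z \<in> sub a"
      proof (cases "{y,z} = {par a, a}")
        case True
        then have "(y = par a \<and> z = a) \<or> (y = a \<and> z = par a)" by (auto simp: doubleton_eq_iff)
        then show ?thesis using z self_sub a by auto
      next
        case False then show ?thesis using h e y by blast
      qed
    qed
    then show "bridge a" using bridge_sub[OF a(1)] by simp
  qed
qed

lemma tree_edge_inj: "y \<in> V \<Longrightarrow> w \<in> V \<Longrightarrow> w \<noteq> l \<Longrightarrow> {par y, y} = {par w, w} \<Longrightarrow> y = w"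
proof (rule ccontr)
  assume a: "y \<in> V" "w \<in> V" "w \<noteq> l" "{par y, y} = {par w, w}" "y \<noteq> w"
  then have yw: "y = par w" "par y = w" by (auto simp: doubleton_eq_iff)
  then have "y \<noteq> l" using a by auto
  then show False using dep_par[OF a(1)] dep_par[OF a(2) a(3)] yw by simp
qed

lemma adj_sym: "(a,b) \<in> adj F \<longleftrightarrow> (b,a) \<in> adj F" by (simp add: adj_def insert_commute)

lemma rt_sym: "(a,b) \<in> (adj F)\<^sup>* \<Longrightarrow> (b,a) \<in> (adj F)\<^sup>*"
proof -
  assume "(a,b) \<in> (adj F)\<^sup>*"
  then have "(b,a) \<in> ((adj F)\<inverse>)\<^sup>*" by (simp add: rtrancl_converse)
  moreover have "(adj F)\<inverse> = adj F" using adj_sym by auto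
  ultimately show ?thesis by simp
qed

lemma chain_conn: "x \<in> V \<Longrightarrow> (\<forall>j<k. (par ^^ j) x \<noteq> l \<longrightarrow> {par ((par ^^ j) x), (par ^^ j) x} \<noteq> e)
   \<Longrightarrow> (x, (par ^^ k) x) \<in> (adj (E - {e}))\<^sup>*"
proof (induct k)
  case 0 then show ?case by simp
next
  case (Suc k)
  let ?y = "(par ^^ k) x"
  have r: "(x, ?y) \<in> (adj (E - {e}))\<^sup>*" using Suc by auto
  show ?case
  proof (cases "?y = l")
    case True then show ?thesis using r by simp
  next
    case False
    have "{par ?y, ?y} \<in> E" using par pw_V Suc.prems(1) False by blast
    moreover have "{par ?y, ?y} \<noteq> e" using Suc.prems(2) False by auto
    ultimately have "(?y, par ?y) \<in> adj (E - {e})" by (simp add: adj_def insert_commute)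
    then show ?thesis using r by simp
  qed
qed

lemma conn_root_out: "w \<in> V \<Longrightarrow> w \<noteq> l \<Longrightarrow> x \<in> V \<Longrightarrow> x \<notin> sub w \<Longrightarrow> (x, l) \<in> (adj (E - {{par w, w}}))\<^sup>*"
proof -
  assume a: "w \<in> V" "w \<noteq> l" "x \<in> V" "x \<notin> sub w"
  have "\<forall>j<dep x. (par ^^ j) x \<noteq> l \<longrightarrow> {par ((par ^^ j) x), (par ^^ j) x} \<noteq> {par w, w}"
  proof (intro allI impI)
    fix j assume "j < dep x" "(par ^^ j) x \<noteq> l"
    have "(par ^^ j) x \<noteq> w" using a by (auto simp: sub_def)
    then show "{par ((par ^^ j) x), (par ^^ j) x} \<noteq> {par w, w}" using tree_edge_inj pw_V a by blast
  qed
  then have "(x, (par ^^ dep x) x) \<in> (adj (E - {{par w, w}}))\<^sup>*" by (rule chain_conn[OF a(3)])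
  then show ?thesis using pw_root[OF a(3)] by simp
qed

lemma conn_root_gen: "x \<in> V \<Longrightarrow> (\<forall>w\<in>V. w \<noteq> l \<longrightarrow> e \<noteq> {par w, w}) \<Longrightarrow> (x, l) \<in> (adj (E - {e}))\<^sup>*"
proof -
  assume a: "x \<in> V" "\<forall>w\<in>V. w \<noteq> l \<longrightarrow> e \<noteq> {par w, w}"
  have "\<forall>j<dep x. (par ^^ j) x \<noteq> l \<longrightarrow> {par ((par ^^ j) x), (par ^^ j) x} \<noteq> e"
  proof (intro allI impI)
    fix j assume "j < dep x" "(par ^^ j) x \<noteq> l"
    then show "{par ((par ^^ j) x), (par ^^ j) x} \<noteq> e" using a(2) pw_V[OF a(1), of j] by blast
  qed
  then have "(x, (par ^^ dep x) x) \<in> (adj (E - {e}))\<^sup>*" by (rule chain_conn[OF a(1)])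
  then show ?thesis using pw_root[OF a(1)] by simp
qed

lemma conn_up: "w \<in> V \<Longrightarrow> w \<noteq> l \<Longrightarrow> x \<in> sub w \<Longrightarrow> (x, w) \<in> (adj (E - {{par w, w}}))\<^sup>*"
proof -
  assume a: "w \<in> V" "w \<noteq> l" "x \<in> sub w"
  then have xV: "x \<in> V" and ex: "\<exists>k. (par ^^ k) x = w" by (auto simp: sub_def)
  define k where "k = (LEAST k. (par ^^ k) x = w)"
  have k: "(par ^^ k) x = w" unfolding k_def using ex by (rule LeastI_ex)
  have "\<forall>j<k. (par ^^ j) x \<noteq> l \<longrightarrow> {par ((par ^^ j) x), (par ^^ j) x} \<noteq> {par w, w}"
  proof (intro allI impI)
    fix j assume j: "j < k" "(par ^^ j) x \<noteq> l"
    have "(par ^^ j) x \<noteq> w" using j(1) k_def not_less_Least by blast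
    then show "{par ((par ^^ j) x), (par ^^ j) x} \<noteq> {par w, w}" using tree_edge_inj pw_V xV a by blast
  qed
  then have "(x, (par ^^ k) x) \<in> (adj (E - {{par w, w}}))\<^sup>*" by (rule chain_conn[OF xV])
  then show ?thesis using k by simp
qed

lemma noncut: "e \<in> E \<Longrightarrow> \<not>(\<exists>w\<in>V. w \<noteq> l \<and> e = {par w, w} \<and> bridge w) \<Longrightarrow> x \<in> V \<Longrightarrow> (x, l) \<in> (adj (E - {e}))\<^sup>*"
proof -
  assume e: "e \<in> E" and nb: "\<not>(\<exists>w\<in>V. w \<noteq> l \<and> e = {par w, w} \<and> bridge w)" and x: "x \<in> V"
  show ?thesis
  proof (cases "\<exists>w\<in>V. w \<noteq> l \<and> e = {par w, w}")
    case False then show ?thesis using conn_root_gen x by blast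
  next
    case True
    then obtain w where w: "w \<in> V" "w \<noteq> l" "e = {par w, w}" by blast
    then have "\<not> bridge w" using nb by blast
    then obtain y z where yz: "{y,z} \<in> E" "{y,z} \<noteq> e" "y \<in> sub w" "z \<notin> sub w"
      using bridge_iff[OF w(1,2)] w(3) by blast
    have zV: "z \<in> V" using yz(1) edge_V by blast
    have c1: "(z, l) \<in> (adj (E - {e}))\<^sup>*" using conn_root_out[OF w(1,2) zV yz(4)] w(3) by simp
    have c2: "(y, z) \<in> adj (E - {e})" using yz by (simp add: adj_def)
    have c3: "(y, w) \<in> (adj (E - {e}))\<^sup>*" using conn_up[OF w(1,2) yz(3)] w(3) by simp
    have wl: "(w, l) \<in> (adj (E - {e}))\<^sup>*" by (rule rtrancl_trans[OF rtrancl_trans[OF rt_sym[OF c3] r_into_rtrancl[OF c2]] c1])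
    show ?thesis
    proof (cases "x \<in> sub w")
      case True then show ?thesis using conn_up[OF w(1,2) True] wl w(3) by simp
    next
      case False then show ?thesis using conn_root_out[OF w(1,2) x] w(3) by simp
    qed
  qed
qed

lemma cut_side: "w \<in> V \<Longrightarrow> w \<noteq> l \<Longrightarrow> bridge w \<Longrightarrow> (u,v) \<in> (adj (E - {{par w, w}}))\<^sup>* \<Longrightarrow> u \<in> sub w \<Longrightarrow> v \<in> sub w"
proof -
  assume w: "w \<in> V" "w \<noteq> l" "bridge w" and r: "(u,v) \<in> (adj (E - {{par w, w}}))\<^sup>*"
  show "u \<in> sub w \<Longrightarrow> v \<in> sub w"
    using r
  proof (induct rule: rtrancl_induct)
    case base then show ?case .
  next
    case (step y z)
    then have "{y,z} \<in> E" "{y,z} \<noteq> {par w, w}" by (auto simp: adj_def)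
    then show ?case using step bridge_iff[OF w(1,2)] w(3) by blast
  qed
qed

lemma biconn_sides: "u \<in> V \<Longrightarrow> v \<in> V \<Longrightarrow> edge_biconn V E u v \<longleftrightarrow> (\<forall>w\<in>V. w \<noteq> l \<and> bridge w \<longrightarrow> (u \<in> sub w \<longleftrightarrow> v \<in> sub w))"
proof
  assume u: "u \<in> V" and v: "v \<in> V"
  {
    assume b: "edge_biconn V E u v"
    show "\<forall>w\<in>V. w \<noteq> l \<and> bridge w \<longrightarrow> (u \<in> sub w \<longleftrightarrow> v \<in> sub w)"
    proof (intro ballI impI)
      fix w assume w: "w \<in> V" "w \<noteq> l \<and> bridge w"
      have "{par w, w} \<in> E" using par w by blast
      then have r: "(u,v) \<in> (adj (E - {{par w, w}}))\<^sup>*" using b by (simp add: edge_biconn_def)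
      show "u \<in> sub w \<longleftrightarrow> v \<in> sub w"
        using cut_side[OF w(1) _ _ r] cut_side[OF w(1) _ _ rt_sym[OF r]] w(2) by blast
    qed
  }
  {
    assume h: "\<forall>w\<in>V. w \<noteq> l \<and> bridge w \<longrightarrow> (u \<in> sub w \<longleftrightarrow> v \<in> sub w)"
    show "edge_biconn V E u v"
      unfolding edge_biconn_def
    proof (intro conjI ballI u v)
      fix e assume e: "e \<in> E"
      show "(u, v) \<in> (adj (E - {e}))\<^sup>*"
      proof (cases "\<exists>w\<in>V. w \<noteq> l \<and> e = {par w, w} \<and> bridge w")
        case False
        show ?thesis by (rule rtrancl_trans[OF noncut[OF e False u] rt_sym[OF noncut[OF e False v]]])
      next
        case True
        then obtain w where w: "w \<in> V" "w \<noteq> l" "e = {par w, w}" "bridge w" by blast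
        show ?thesis
        proof (cases "u \<in> sub w")
          case True
          then have "v \<in> sub w" using h w by blast
          then show ?thesis using rtrancl_trans[OF conn_up[OF w(1,2) True] rt_sym[OF conn_up[OF w(1,2) \<open>v \<in> sub w\<close>]]] w(3) by simp
        next
          case False
          then have "v \<notin> sub w" using h w by blast
          then show ?thesis using rtrancl_trans[OF conn_root_out[OF w(1,2) u False] rt_sym[OF conn_root_out[OF w(1,2) v \<open>v \<notin> sub w\<close>]]] w(3) by simp
        qed
      qed
    qed
  }
qed


primrec labF :: "nat \<Rightarrow> nat \<Rightarrow> nat" where
  "labF 0 x = x"
| "labF (Suc k) x = (if bridge x then x else labF k (par x))"

definition lab :: "nat \<Rightarrow> nat" where "lab x = labF (dep x) x"

lemma lab_l: "lab l = l" by (simp add: lab_def dep_l)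

lemma lab_rec: "c \<in> V \<Longrightarrow> c \<noteq> l \<Longrightarrow> lab c = (if bridge c then c else lab (par c))"
proof -
  assume c: "c \<in> V" "c \<noteq> l"
  then have "dep c = Suc (dep (par c))" using dep_par by simp
  then show ?thesis by (simp add: lab_def)
qed

lemma lab_props: "x \<in> V \<Longrightarrow> \<exists>k. (par ^^ k) x = lab x \<and> (\<forall>j<k. \<not> bridge ((par ^^ j) x)) \<and> (lab x = l \<or> bridge (lab x))"
proof (induction "dep x" arbitrary: x)
  case 0
  then have "x = l" using dep0 by simp
  then show ?case using lab_l by (intro exI[of _ 0]) simp
next
  case (Suc d)
  then have xl: "x \<noteq> l" using dep_l by auto
  show ?case
  proof (cases "bridge x")
    case True
    then show ?thesis using lab_rec[OF Suc.prems xl] by (intro exI[of _ 0]) simp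
  next
    case False
    have "d = dep (par x)" using Suc.hyps dep_par[OF Suc.prems xl] by simp
    then obtain k where k: "(par ^^ k) (par x) = lab (par x)" "\<forall>j<k. \<not> bridge ((par ^^ j) (par x))"
       "lab (par x) = l \<or> bridge (lab (par x))"
      using Suc.hyps(1)[of "par x"] parV[OF Suc.prems] by blast
    have l: "lab x = lab (par x)" using lab_rec[OF Suc.prems xl] False by simp
    have "\<forall>j<Suc k. \<not> bridge ((par ^^ j) x)"
    proof (intro allI impI)
      fix j assume "j < Suc k"
      then show "\<not> bridge ((par ^^ j) x)"
        using k(2) False by (cases j) (auto simp: funpow_Suc_right simp del: funpow.simps)
    qed
    moreover have "(par ^^ Suc k) x = lab x" using k(1) l by (simp add: funpow_Suc_right del: funpow.simps)
    ultimately show ?thesis using k(3) l by metis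
  qed
qed

lemma lab_V: "x \<in> V \<Longrightarrow> lab x \<in> V"
  using lab_props pw_V by metis

lemma mutual_anc: "a \<in> V \<Longrightarrow> a \<noteq> l \<Longrightarrow> (par ^^ m) a = b \<Longrightarrow> (par ^^ m') b = a \<Longrightarrow> a = b"
proof -
  assume a: "a \<in> V" "a \<noteq> l" "(par ^^ m) a = b" "(par ^^ m') b = a"
  then have "(par ^^ (m' + m)) a = a" by (simp add: pw_add)
  then have "dep a + (m' + m) = dep a" using pw_dep_eq[OF a(1)] a(2) by blast
  then show ?thesis using a by simp
qed

lemma lab_half: "u \<in> V \<Longrightarrow> v \<in> V \<Longrightarrow> lab u \<noteq> l \<Longrightarrow> (\<forall>w\<in>V. w \<noteq> l \<and> bridge w \<longrightarrow> (u \<in> sub w \<longleftrightarrow> v \<in> sub w)) \<Longrightarrow> lab v = lab u"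
proof -
  assume u: "u \<in> V" and v: "v \<in> V" and al: "lab u \<noteq> l" and h: "\<forall>w\<in>V. w \<noteq> l \<and> bridge w \<longrightarrow> (u \<in> sub w \<longleftrightarrow> v \<in> sub w)"
  obtain k where k: "(par ^^ k) u = lab u" "\<forall>j<k. \<not> bridge ((par ^^ j) u)" "bridge (lab u)"
    using lab_props[OF u] al by blast
  obtain k' where k': "(par ^^ k') v = lab v" "\<forall>j<k'. \<not> bridge ((par ^^ j) v)" "lab v = l \<or> bridge (lab v)"
    using lab_props[OF v] by blast
  have aV: "lab u \<in> V" using lab_V u by blast
  have bV: "lab v \<in> V" using lab_V v by blast
  have "u \<in> sub (lab u)" using k(1) u by (auto simp: sub_def)
  then have "v \<in> sub (lab u)" using h aV al k(3) by blast
  then obtain i where i: "(par ^^ i) v = lab u" by (auto simp: sub_def)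
  have "k' \<le> i"
  proof (rule ccontr)
    assume "\<not> k' \<le> i"
    then have "i < k'" by simp
    then have "\<not> bridge ((par ^^ i) v)" using k'(2) by blast
    then show False using i k(3) by simp
  qed
  then have ba: "(par ^^ (i - k')) (lab v) = lab u" using pw_chain[OF k'(1) i] by simp
  have bl: "lab v \<noteq> l" using ba al by auto
  then have bb: "bridge (lab v)" using k'(3) by simp
  have "v \<in> sub (lab v)" using k'(1) v by (auto simp: sub_def)
  then have "u \<in> sub (lab v)" using h bV bl bb by blast
  then obtain i' where i': "(par ^^ i') u = lab v" by (auto simp: sub_def)
  have "k \<le> i'"
  proof (rule ccontr)
    assume "\<not> k \<le> i'"
    then have "i' < k" by simp
    then have "\<not> bridge ((par ^^ i') u)" using k(2) by blast
    then show False using i' bb by simp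
  qed
  then have ab: "(par ^^ (i' - k)) (lab u) = lab v" using pw_chain[OF k(1) i'] by simp
  show ?thesis using mutual_anc[OF aV al ab ba] by simp
qed

lemma lab_sides: "u \<in> V \<Longrightarrow> v \<in> V \<Longrightarrow> lab u = lab v \<longleftrightarrow> (\<forall>w\<in>V. w \<noteq> l \<and> bridge w \<longrightarrow> (u \<in> sub w \<longleftrightarrow> v \<in> sub w))"
proof
  assume u: "u \<in> V" and v: "v \<in> V"
  {
    assume eq: "lab u = lab v"
    have one: "x \<in> sub w \<Longrightarrow> y \<in> sub w"
      if x: "x \<in> V" and y: "y \<in> V" and e: "lab x = lab y" and w: "w \<in> V" "w \<noteq> l" "bridge w" for x y w
    proof -
      assume "x \<in> sub w"
      then obtain i where i: "(par ^^ i) x = w" by (auto simp: sub_def)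
      obtain k where k: "(par ^^ k) x = lab x" "\<forall>j<k. \<not> bridge ((par ^^ j) x)"
        using lab_props[OF x] by blast
      obtain k' where k': "(par ^^ k') y = lab y"
        using lab_props[OF y] by blast
      have "k \<le> i"
      proof (rule ccontr)
        assume "\<not> k \<le> i"
        then have "i < k" by simp
        then have "\<not> bridge ((par ^^ i) x)" using k(2) by blast
        then show False using i w(3) by simp
      qed
      then have "(par ^^ (i - k)) (lab x) = w" using pw_chain[OF k(1) i] by simp
      then have "(par ^^ (i - k + k')) y = w" using k' e by (simp add: pw_add)
      then show "y \<in> sub w" using y by (auto simp: sub_def)
    qed
    show "\<forall>w\<in>V. w \<noteq> l \<and> bridge w \<longrightarrow> (u \<in> sub w \<longleftrightarrow> v \<in> sub w)"
      using one[OF u v eq] one[OF v u eq[symmetric]] by blast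
  }
  {
    assume h: "\<forall>w\<in>V. w \<noteq> l \<and> bridge w \<longrightarrow> (u \<in> sub w \<longleftrightarrow> v \<in> sub w)"
    then have h': "\<forall>w\<in>V. w \<noteq> l \<and> bridge w \<longrightarrow> (v \<in> sub w \<longleftrightarrow> u \<in> sub w)" by blast
    show "lab u = lab v"
    proof (cases "lab u = l")
      case False then show ?thesis using lab_half[OF u v False h] by simp
    next
      case True
      show ?thesis
      proof (cases "lab v = l")
        case True then show ?thesis using \<open>lab u = l\<close> by simp
      next
        case False then show ?thesis using lab_half[OF v u False h'] by simp
      qed
    qed
  }
qed

theorem lab_correct: "u \<in> V \<Longrightarrow> v \<in> V \<Longrightarrow> lab u = lab v \<longleftrightarrow> edge_biconn V E u v"
  using lab_sides biconn_sides by simp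

lemma Min_UN:
  fixes A :: "nat set"
  assumes A: "finite A" "A \<noteq> {}" and C: "finite C" and G: "\<And>c. c \<in> C \<Longrightarrow> finite (Gs c) \<and> Gs c \<noteq> {}"
  shows "Min (A \<union> (\<Union>c\<in>C. Gs c)) = Min (A \<union> (\<lambda>c. Min (Gs c)) ` C)"
proof (rule antisym)
  let ?L = "A \<union> (\<Union>c\<in>C. Gs c)" and ?R = "A \<union> (\<lambda>c. Min (Gs c)) ` C"
  have f1: "finite ?L" "?L \<noteq> {}" using A C G by auto
  have f2: "finite ?R" "?R \<noteq> {}" using A C by auto
  have "\<forall>s\<in>?R. Min ?L \<le> s"
  proof
    fix s assume "s \<in> ?R"
    then show "Min ?L \<le> s"
    proof
      assume "s \<in> A" then show ?thesis using f1 by simp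
    next
      assume "s \<in> (\<lambda>c. Min (Gs c)) ` C"
      then obtain c where c: "c \<in> C" "s = Min (Gs c)" by auto
      then have "s \<in> Gs c" using G Min_in by blast
      then show ?thesis using f1 c by (intro Min_le) auto
    qed
  qed
  then show "Min ?L \<le> Min ?R" using f2 by simp
  have "\<forall>s\<in>?L. Min ?R \<le> s"
  proof
    fix s assume "s \<in> ?L"
    then show "Min ?R \<le> s"
    proof
      assume "s \<in> A" then show ?thesis using f2 by simp
    next
      assume "s \<in> (\<Union>c\<in>C. Gs c)"
      then obtain c where c: "c \<in> C" "s \<in> Gs c" by auto
      have "Min ?R \<le> Min (Gs c)" using f2 c by (intro Min_le) auto
      also have "\<dots> \<le> s" using G c by simp
      finally show ?thesis .
    qed
  qed
  then show "Min ?R \<le> Min ?L" using f1 by simp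
qed

lemma Max_UN:
  fixes A :: "nat set"
  assumes A: "finite A" "A \<noteq> {}" and C: "finite C" and G: "\<And>c. c \<in> C \<Longrightarrow> finite (Gs c) \<and> Gs c \<noteq> {}"
  shows "Max (A \<union> (\<Union>c\<in>C. Gs c)) = Max (A \<union> (\<lambda>c. Max (Gs c)) ` C)"
proof (rule antisym)
  let ?L = "A \<union> (\<Union>c\<in>C. Gs c)" and ?R = "A \<union> (\<lambda>c. Max (Gs c)) ` C"
  have f1: "finite ?L" "?L \<noteq> {}" using A C G by auto
  have f2: "finite ?R" "?R \<noteq> {}" using A C by auto
  have "\<forall>s\<in>?R. s \<le> Max ?L"
  proof
    fix s assume "s \<in> ?R"
    then show "s \<le> Max ?L"
    proof
      assume "s \<in> A" then show ?thesis using f1 by simp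
    next
      assume "s \<in> (\<lambda>c. Max (Gs c)) ` C"
      then obtain c where c: "c \<in> C" "s = Max (Gs c)" by auto
      then have "s \<in> Gs c" using G Max_in by blast
      then show ?thesis using f1 c by (intro Max_ge) auto
    qed
  qed
  then show "Max ?R \<le> Max ?L" using f2 by simp
  have "\<forall>s\<in>?L. s \<le> Max ?R"
  proof
    fix s assume "s \<in> ?L"
    then show "s \<le> Max ?R"
    proof
      assume "s \<in> A" then show ?thesis using f2 by simp
    next
      assume "s \<in> (\<Union>c\<in>C. Gs c)"
      then obtain c where c: "c \<in> C" "s \<in> Gs c" by auto
      have "s \<le> Max (Gs c)" using G c by simp
      also have "\<dots> \<le> Max ?R" using f2 c by (intro Max_ge) auto
      finally show ?thesis .
    qed
  qed
  then show "Max ?L \<le> Max ?R" using f1 by simp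
qed

lemma UFF_decomp: "a \<in> V \<Longrightarrow> (\<Union>y\<in>sub a. FF y) = FF a \<union> (\<Union>c\<in>children a. (\<Union>y\<in>sub c. FF y))"
  by (subst sub_decomp) auto

lemma low_rec: "a \<in> V \<Longrightarrow> low a = Min (insert (pre a) (pre ` (nbrs E a - {par a})) \<union> low ` children a)"
proof -
  assume a: "a \<in> V"
  have "low a = Min (FF a \<union> (\<lambda>c. Min (\<Union>y\<in>sub c. FF y)) ` children a)"
    unfolding low_def using a fin_FF fin_children fin_UFF ne_UFF childrenD
    by (subst UFF_decomp[OF a], intro Min_UN) (auto simp: FF_def)
  then show ?thesis by (simp add: FF_def low_def)
qed

lemma high_rec: "a \<in> V \<Longrightarrow> high a = Max (insert (pre a) (pre ` (nbrs E a - {par a})) \<union> high ` children a)"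
proof -
  assume a: "a \<in> V"
  have "high a = Max (FF a \<union> (\<lambda>c. Max (\<Union>y\<in>sub c. FF y)) ` children a)"
    unfolding high_def using a fin_FF fin_children fin_UFF ne_UFF childrenD
    by (subst UFF_decomp[OF a], intro Max_UN) (auto simp: FF_def)
  then show ?thesis by (simp add: FF_def high_def)
qed

lemma low_lt: "a \<in> V \<Longrightarrow> low a < card V"
proof -
  assume a: "a \<in> V"
  have "low a \<in> (\<Union>y\<in>sub a. FF y)" unfolding low_def using fin_UFF ne_UFF[OF a] by (rule Min_in)
  moreover have "(\<Union>y\<in>sub a. FF y) \<subseteq> pre ` V" using sub_V nbrsD by (auto simp: FF_def)
  ultimately show ?thesis using pre_lt by auto
qed

lemma high_lt: "a \<in> V \<Longrightarrow> high a < card V"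
proof -
  assume a: "a \<in> V"
  have "high a \<in> (\<Union>y\<in>sub a. FF y)" unfolding high_def using fin_UFF ne_UFF[OF a] by (rule Max_in)
  moreover have "(\<Union>y\<in>sub a. FF y) \<subseteq> pre ` V" using sub_V nbrsD by (auto simp: FF_def)
  ultimately show ?thesis using pre_lt by auto
qed


end

abbreviation penc :: "nat \<Rightarrow> nat \<Rightarrow> nat" where "penc a b \<equiv> prod_encode (a, b)"

lemma penc_inj[simp]: "penc a b = penc c d \<longleftrightarrow> a = c \<and> b = d"
  by (simp add: prod_encode_eq)

record lview =
  vi :: nat
  vlf :: bool
  vN :: "nat set"
  vt :: nat
  vh :: "nat \<Rightarrow> nat \<Rightarrow> nat option"

definition got :: "(nat \<Rightarrow> nat \<Rightarrow> nat option) \<Rightarrow> nat \<Rightarrow> nat \<Rightarrow> nat \<Rightarrow> nat \<Rightarrow> bool" where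
  "got h t y k p \<longleftrightarrow> (\<exists>r<t. h r y = Some (penc k p))"
definition hasg :: "(nat \<Rightarrow> nat \<Rightarrow> nat option) \<Rightarrow> nat \<Rightarrow> nat \<Rightarrow> nat \<Rightarrow> bool" where
  "hasg h t y k \<longleftrightarrow> (\<exists>p. got h t y k p)"
definition gotv :: "(nat \<Rightarrow> nat \<Rightarrow> nat option) \<Rightarrow> nat \<Rightarrow> nat \<Rightarrow> nat \<Rightarrow> nat" where
  "gotv h t y k = (THE p. got h t y k p)"

definition reachedAt :: "lview \<Rightarrow> nat \<Rightarrow> bool" where
  "reachedAt w t \<longleftrightarrow> vlf w \<or> (\<exists>y\<in>vN w. hasg (vh w) t y 1)"
definition depL :: "lview \<Rightarrow> nat" where
  "depL w = (if vlf w then 0 else Suc (LEAST r. \<exists>y p. vh w r y = Some (penc 1 p)))"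
definition parL :: "lview \<Rightarrow> nat" where
  "parL w = (if vlf w then vi w else (LEAST y. \<exists>p. vh w (depL w - 1) y = Some (penc 1 p)))"
definition chAt :: "lview \<Rightarrow> nat \<Rightarrow> nat set" where
  "chAt w t = {y. got (vh w) t y 1 1}"
definition readyAt :: "lview \<Rightarrow> nat \<Rightarrow> bool" where
  "readyAt w t \<longleftrightarrow> reachedAt w t \<and> depL w + 2 \<le> t \<and> (\<forall>c\<in>chAt w t. hasg (vh w) t c 2)"
definition sizeL :: "lview \<Rightarrow> nat" where
  "sizeL w = 1 + (\<Sum>c\<in>chAt w (vt w). fst (prod_decode (gotv (vh w) (vt w) c 2)))"
definition mdL :: "lview \<Rightarrow> nat" where
  "mdL w = Max (insert (depL w) ((\<lambda>c. snd (prod_decode (gotv (vh w) (vt w) c 2))) ` chAt w (vt w)))"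
definition knowsL :: "lview \<Rightarrow> bool" where
  "knowsL w \<longleftrightarrow> (if vlf w then readyAt w (vt w) else reachedAt w (vt w) \<and> hasg (vh w) (vt w) (parL w) 3)"
definition DmL :: "lview \<Rightarrow> nat" where
  "DmL w = (if vlf w then mdL w else snd (prod_decode (gotv (vh w) (vt w) (parL w) 3)))"
definition preL :: "lview \<Rightarrow> nat" where
  "preL w = (if vlf w then 0 else fst (prod_decode (gotv (vh w) (vt w) (parL w) 3)))"
definition preCh :: "lview \<Rightarrow> nat \<Rightarrow> nat" where
  "preCh w c = preL w + 1 + (\<Sum>c'\<in>{c' \<in> chAt w (vt w). c' < c}. fst (prod_decode (gotv (vh w) (vt w) c' 2)))"
definition lowL :: "lview \<Rightarrow> nat" where
  "lowL w = Min (insert (preL w) ((\<lambda>y. gotv (vh w) (vt w) y 4) ` (vN w - {parL w}))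
     \<union> (\<lambda>c. fst (prod_decode (gotv (vh w) (vt w) c 5))) ` chAt w (vt w))"
definition highL :: "lview \<Rightarrow> nat" where
  "highL w = Max (insert (preL w) ((\<lambda>y. gotv (vh w) (vt w) y 4) ` (vN w - {parL w}))
     \<union> (\<lambda>c. snd (prod_decode (gotv (vh w) (vt w) c 5))) ` chAt w (vt w))"
definition bridgeL :: "lview \<Rightarrow> bool" where
  "bridgeL w \<longleftrightarrow> preL w \<le> lowL w \<and> highL w < preL w + sizeL w"
definition labL :: "lview \<Rightarrow> nat" where
  "labL w = (if vlf w then vi w else if bridgeL w then vi w else gotv (vh w) (vt w) (parL w) 6)"
definition haltedL :: "lview \<Rightarrow> bool" where
  "haltedL w \<longleftrightarrow> knowsL w \<and> 5 * DmL w + 5 \<le> vt w"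
definition msgL :: "lview \<Rightarrow> nat \<Rightarrow> nat option" where
  "msgL w v = (let t = vt w in
     if reachedAt w t \<and> t = depL w then Some (penc 1 (if \<not> vlf w \<and> v = parL w then 1 else 0))
     else if \<not> vlf w \<and> reachedAt w t \<and> v = parL w \<and> readyAt w t \<and> \<not> readyAt w (t - 1)
       then Some (penc 2 (penc (sizeL w) (mdL w)))
     else if knowsL w \<and> v \<in> chAt w t \<and> t = 2 * DmL w + 2 + depL w then Some (penc 3 (penc (preCh w v) (DmL w)))
     else if knowsL w \<and> t = 3 * DmL w + 3 then Some (penc 4 (preL w))
     else if \<not> vlf w \<and> knowsL w \<and> v = parL w \<and> t = 4 * DmL w + 4 - depL w then Some (penc 5 (penc (lowL w) (highL w)))
     else if knowsL w \<and> v \<in> chAt w t \<and> t = 4 * DmL w + 5 + depL w then Some (penc 6 (labL w))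
     else None)"

lemma gotv_eq: "got h t y k p \<Longrightarrow> (\<And>p'. got h t y k p' \<Longrightarrow> p' = p) \<Longrightarrow> gotv h t y k = p"
  unfolding gotv_def by (rule the_equality)

context G begin

definition Ms :: "nat \<Rightarrow> nat \<Rightarrow> nat \<Rightarrow> nat option" where
  "Ms t s v = (if t = dep s then Some (penc 1 (if s \<noteq> l \<and> v = par s then 1 else 0))
     else if s \<noteq> l \<and> v = par s \<and> t = su s then Some (penc 2 (penc (size s) (md s)))
     else if v \<in> children s \<and> t = 2 * Dm + 2 + dep s then Some (penc 3 (penc (pre v) Dm))
     else if t = 3 * Dm + 3 then Some (penc 4 (pre s))
     else if s \<noteq> l \<and> v = par s \<and> t = 4 * Dm + 4 - dep s then Some (penc 5 (penc (low s) (high s)))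
     else if v \<in> children s \<and> t = 4 * Dm + 5 + dep s then Some (penc 6 (lab s))
     else None)"

lemma facts_s: "s \<in> V \<Longrightarrow> dep s \<le> md s \<and> md s \<le> Dm \<and> dep s \<le> Dm \<and> su s = 2 * md s - dep s + 2 \<and> (s \<noteq> l \<longrightarrow> 1 \<le> dep s)"
  using md_ge md_le_Dm dep_le_Dm su_def dep0 by fastforce

lemma M1: "s \<in> V \<Longrightarrow> Ms t s v = Some (penc 1 p) \<longleftrightarrow> t = dep s \<and> p = (if s \<noteq> l \<and> v = par s then 1 else 0)"
  using facts_s[of s] unfolding Ms_def by auto

lemma M2: "s \<in> V \<Longrightarrow> Ms t s v = Some (penc 2 p) \<longleftrightarrow> s \<noteq> l \<and> v = par s \<and> t = su s \<and> p = penc (size s) (md s)"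
  using facts_s[of s] unfolding Ms_def by auto

lemma M3: "s \<in> V \<Longrightarrow> Ms t s v = Some (penc 3 p) \<longleftrightarrow> v \<in> children s \<and> t = 2 * Dm + 2 + dep s \<and> p = penc (pre v) Dm"
  using facts_s[of s] unfolding Ms_def by auto

lemma M4: "s \<in> V \<Longrightarrow> Ms t s v = Some (penc 4 p) \<longleftrightarrow> t = 3 * Dm + 3 \<and> p = pre s"
  using facts_s[of s] unfolding Ms_def by auto

lemma M5: "s \<in> V \<Longrightarrow> Ms t s v = Some (penc 5 p) \<longleftrightarrow> s \<noteq> l \<and> v = par s \<and> t = 4 * Dm + 4 - dep s \<and> p = penc (low s) (high s)"
  using facts_s[of s] unfolding Ms_def by auto

lemma M6: "s \<in> V \<Longrightarrow> Ms t s v = Some (penc 6 p) \<longleftrightarrow> v \<in> children s \<and> t = 4 * Dm + 5 + dep s \<and> p = lab s"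
  using facts_s[of s] unfolding Ms_def by auto

end

context G begin

definition hI :: "nat \<Rightarrow> nat \<Rightarrow> nat \<Rightarrow> nat \<Rightarrow> nat option" where
  "hI t x r y = (if r < t \<and> y \<in> nbrs E x then Ms r y x else None)"

definition iview :: "nat \<Rightarrow> nat \<Rightarrow> lview" where
  "iview t x = \<lparr>vi = x, vlf = (x = l), vN = nbrs E x, vt = t, vh = hI t x\<rparr>"

lemma iview_simps[simp]: "vi (iview t x) = x" "vlf (iview t x) = (x = l)" "vN (iview t x) = nbrs E x"
  "vt (iview t x) = t" "vh (iview t x) = hI t x"
  by (simp_all add: iview_def)

lemma nbrs_V: "y \<in> nbrs E x \<Longrightarrow> y \<in> V" using nbrsD by blast

lemma got_hI: "t' \<le> t \<Longrightarrow> got (hI t x) t' y k p \<longleftrightarrow> y \<in> nbrs E x \<and> (\<exists>r<t'. Ms r y x = Some (penc k p))"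
proof -
  assume tt: "t' \<le> t"
  show ?thesis
  proof
    assume "got (hI t x) t' y k p"
    then obtain r where r: "r < t'" "hI t x r y = Some (penc k p)" unfolding got_def by blast
    then have "y \<in> nbrs E x" "Ms r y x = Some (penc k p)" unfolding hI_def by (auto split: if_splits)
    then show "y \<in> nbrs E x \<and> (\<exists>r<t'. Ms r y x = Some (penc k p))" using r(1) by blast
  next
    assume "y \<in> nbrs E x \<and> (\<exists>r<t'. Ms r y x = Some (penc k p))"
    then obtain r where "y \<in> nbrs E x" "r < t'" "Ms r y x = Some (penc k p)" by blast
    then show "got (hI t x) t' y k p" unfolding got_def hI_def using tt by (intro exI[of _ r]) auto
  qed
qed

lemma G1: assumes "t' \<le> t" shows "got (hI t x) t' y 1 p \<longleftrightarrow> y \<in> nbrs E x \<and> dep y < t' \<and> p = (if y \<noteq> l \<and> x = par y then 1 else 0)"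
  unfolding got_hI[OF assms] using M1[OF nbrs_V, of y x] by auto
lemma G2: assumes "t' \<le> t" shows "got (hI t x) t' y 2 p \<longleftrightarrow> y \<in> nbrs E x \<and> y \<noteq> l \<and> x = par y \<and> su y < t' \<and> p = penc (size y) (md y)"
  unfolding got_hI[OF assms] using M2[OF nbrs_V, of y x] by auto
lemma G3: assumes "t' \<le> t" shows "got (hI t x) t' y 3 p \<longleftrightarrow> y \<in> nbrs E x \<and> x \<in> children y \<and> 2 * Dm + 2 + dep y < t' \<and> p = penc (pre x) Dm"
  unfolding got_hI[OF assms] using M3[OF nbrs_V, of y x] by auto
lemma G4: assumes "t' \<le> t" shows "got (hI t x) t' y 4 p \<longleftrightarrow> y \<in> nbrs E x \<and> 3 * Dm + 3 < t' \<and> p = pre y"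
  unfolding got_hI[OF assms] using M4[OF nbrs_V, of y x] by auto
lemma G5: assumes "t' \<le> t" shows "got (hI t x) t' y 5 p \<longleftrightarrow> y \<in> nbrs E x \<and> y \<noteq> l \<and> x = par y \<and> 4 * Dm + 4 - dep y < t' \<and> p = penc (low y) (high y)"
  unfolding got_hI[OF assms] using M5[OF nbrs_V, of y x] by auto
lemma G6: assumes "t' \<le> t" shows "got (hI t x) t' y 6 p \<longleftrightarrow> y \<in> nbrs E x \<and> x \<in> children y \<and> 4 * Dm + 5 + dep y < t' \<and> p = lab y"
  unfolding got_hI[OF assms] using M6[OF nbrs_V, of y x] by auto

lemma hasg_iff: "hasg h t y k \<longleftrightarrow> (\<exists>p. got h t y k p)" by (simp add: hasg_def)

lemma children_iff: "y \<in> nbrs E x \<Longrightarrow> (y \<noteq> l \<and> x = par y) \<longleftrightarrow> y \<in> children x"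
  using nbrs_V by (auto simp: children_def)

lemma par_dep_nbr: "x \<in> V \<Longrightarrow> x \<noteq> l \<Longrightarrow> par x \<in> nbrs E x \<and> dep (par x) = dep x - 1 \<and> 1 \<le> dep x"
  using par_nbr dep_par by fastforce

lemma R: assumes x: "x \<in> V" and tt: "t' \<le> t" shows "reachedAt (iview t x) t' \<longleftrightarrow> dep x \<le> t'"
proof (cases "x = l")
  case True then show ?thesis by (simp add: reachedAt_def dep_l)
next
  case False
  have "reachedAt (iview t x) t' \<longleftrightarrow> (\<exists>y\<in>nbrs E x. dep y < t')"
    using False G1[OF tt] by (auto simp: reachedAt_def hasg_def)
  also have "\<dots> \<longleftrightarrow> dep x \<le> t'"
  proof
    assume "\<exists>y\<in>nbrs E x. dep y < t'"
    then obtain y where "y \<in> nbrs E x" "dep y < t'" by blast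
    moreover have "dep x \<le> dep y + 1" using calculation(1) nbrs_sym dep_nbr by blast
    ultimately show "dep x \<le> t'" by simp
  next
    assume "dep x \<le> t'"
    then show "\<exists>y\<in>nbrs E x. dep y < t'" using par_dep_nbr[OF x False] by (intro bexI[of _ "par x"]) auto
  qed
  finally show ?thesis .
qed

lemma D: assumes x: "x \<in> V" and d: "dep x \<le> t" shows "depL (iview t x) = dep x"
proof (cases "x = l")
  case True then show ?thesis by (simp add: depL_def dep_l)
next
  case False
  note pd = par_dep_nbr[OF x False]
  have "(LEAST r. \<exists>y p. hI t x r y = Some (penc 1 p)) = dep x - 1"
  proof (rule Least_equality)
    have "hI t x (dep x - 1) (par x) = Some (penc 1 (if par x \<noteq> l \<and> x = par (par x) then 1 else 0))"
      using pd d M1[OF nbrs_V[OF pd[THEN conjunct1]]] unfolding hI_def by auto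
    then show "\<exists>y p. hI t x (dep x - 1) y = Some (penc 1 p)" by blast
  next
    fix r assume "\<exists>y p. hI t x r y = Some (penc 1 p)"
    then obtain y p where "hI t x r y = Some (penc 1 p)" by blast
    then have "y \<in> nbrs E x" "Ms r y x = Some (penc 1 p)" unfolding hI_def by (auto split: if_splits)
    then have "r = dep y" "dep x \<le> dep y + 1" using M1[OF nbrs_V] nbrs_sym dep_nbr by blast+
    then show "dep x - 1 \<le> r" by simp
  qed
  then show ?thesis using False pd by (simp add: depL_def)
qed

lemma P: assumes x: "x \<in> V" and d: "dep x \<le> t" shows "parL (iview t x) = par x"
proof (cases "x = l")
  case True then show ?thesis by (simp add: parL_def)
next
  case False
  note pd = par_dep_nbr[OF x False]
  have eq: "(\<exists>p. hI t x (dep x - 1) y = Some (penc 1 p)) \<longleftrightarrow> ({y,x} \<in> E \<and> dep y + 1 = dep x)" for y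
  proof -
    have "(\<exists>p. hI t x (dep x - 1) y = Some (penc 1 p)) \<longleftrightarrow> y \<in> nbrs E x \<and> (\<exists>p. Ms (dep x - 1) y x = Some (penc 1 p))"
      unfolding hI_def using pd d by auto
    also have "\<dots> \<longleftrightarrow> y \<in> nbrs E x \<and> dep y = dep x - 1"
      using M1[OF nbrs_V, of y x] by auto
    also have "\<dots> \<longleftrightarrow> ({y,x} \<in> E \<and> dep y + 1 = dep x)" using pd by (auto simp: nbrs_def)
    finally show ?thesis .
  qed
  have "parL (iview t x) = (LEAST y. \<exists>p. hI t x (dep x - 1) y = Some (penc 1 p))"
    using D[OF x d] False by (simp add: parL_def)
  also have "\<dots> = par x" using eq False by (simp add: par_def)
  finally show ?thesis .
qed

lemma C: assumes x: "x \<in> V" and tt: "t' \<le> t" and d: "dep x + 2 \<le> t'" shows "chAt (iview t x) t' = children x"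
proof -
  have "chAt (iview t x) t' = {y. y \<in> nbrs E x \<and> dep y < t' \<and> y \<noteq> l \<and> x = par y}"
    unfolding chAt_def using G1[OF tt] by auto
  also have "\<dots> = children x"
    using childrenD d children_iff by fastforce
  finally show ?thesis .
qed

lemma RD: assumes x: "x \<in> V" and tt: "t' \<le> t" shows "readyAt (iview t x) t' \<longleftrightarrow> su x \<le> t'"
proof
  assume r: "readyAt (iview t x) t'"
  then have dx: "dep x \<le> t'" using R[OF x tt] by (simp add: readyAt_def)
  then have dL: "depL (iview t x) = dep x" using D[OF x] tt by simp
  then have d2: "dep x + 2 \<le> t'" using r by (simp add: readyAt_def)
  then have ch: "chAt (iview t x) t' = children x" using C[OF x tt] by simp
  have "\<forall>c\<in>children x. su c < t'"
  proof
    fix c assume c: "c \<in> children x"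
    then have "hasg (hI t x) t' c 2" using r ch by (simp add: readyAt_def)
    then show "su c < t'" using G2[OF tt] by (auto simp: hasg_def)
  qed
  then show "su x \<le> t'" using su_ready[OF x] d2 by simp
next
  assume s: "su x \<le> t'"
  then have d2: "dep x + 2 \<le> t'" and cs: "\<forall>c\<in>children x. su c < t'" using su_ready[OF x] by auto
  have dL: "depL (iview t x) = dep x" using D[OF x] tt d2 by simp
  have ch: "chAt (iview t x) t' = children x" using C[OF x tt d2] .
  have "\<forall>c\<in>children x. hasg (hI t x) t' c 2"
  proof
    fix c assume c: "c \<in> children x"
    then show "hasg (hI t x) t' c 2" using G2[OF tt] cs childrenD[OF c] nbrs_sym by (auto simp: hasg_def)
  qed
  then show "readyAt (iview t x) t'" using R[OF x tt] d2 dL ch by (simp add: readyAt_def)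
qed

lemma gv2: assumes "c \<in> children x" "su c < t" shows "gotv (hI t x) t c 2 = penc (size c) (md c)"
  using assms childrenD[OF assms(1)] nbrs_sym G2[of t t] by (intro gotv_eq) auto

lemma S: assumes x: "x \<in> V" and s: "su x \<le> t" shows "sizeL (iview t x) = size x \<and> mdL (iview t x) = md x"
proof -
  have d2: "dep x + 2 \<le> t" and cs: "\<forall>c\<in>children x. su c < t" using su_ready[OF x] s by auto
  have ch: "chAt (iview t x) t = children x" using C[OF x _ d2] by simp
  have dL: "depL (iview t x) = dep x" using D[OF x] d2 by simp
  have g: "\<And>c. c \<in> children x \<Longrightarrow> gotv (hI t x) t c 2 = penc (size c) (md c)" using gv2 cs by blast
  have "sizeL (iview t x) = 1 + (\<Sum>c\<in>children x. size c)"
    unfolding sizeL_def using ch g by (simp cong: sum.cong)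
  moreover have "mdL (iview t x) = Max (insert (dep x) (md ` children x))"
    unfolding mdL_def using ch g dL by (simp cong: image_cong)
  ultimately show ?thesis using size_rec[OF x] md_Max[OF x] by simp
qed


lemma K: assumes x: "x \<in> V" shows "knowsL (iview t x) \<longleftrightarrow> 2 * Dm + 2 + dep x \<le> t"
proof (cases "x = l")
  case True then show ?thesis using RD[OF x, of t t] by (simp add: knowsL_def su_l dep_l)
next
  case False
  note pd = par_dep_nbr[OF x False]
  show ?thesis
  proof (cases "dep x \<le> t")
    case True
    have xc: "x \<in> children (par x)" using x False by (simp add: children_def)
    have "knowsL (iview t x) \<longleftrightarrow> hasg (hI t x) t (par x) 3"
      using False R[OF x, of t t] True P[OF x True] by (simp add: knowsL_def)
    also have "\<dots> \<longleftrightarrow> 2 * Dm + 2 + dep (par x) < t" using G3[of t t] pd xc by (auto simp: hasg_def)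
    finally show ?thesis using pd by (simp add: Suc_le_eq)
  next
    case False
    then show ?thesis using \<open>x \<noteq> l\<close> R[OF x, of t t] by (simp add: knowsL_def)
  qed
qed

lemma KD: assumes x: "x \<in> V" and k: "2 * Dm + 2 + dep x \<le> t" shows "DmL (iview t x) = Dm \<and> preL (iview t x) = pre x"
proof (cases "x = l")
  case True
  then have "mdL (iview t x) = Dm" using S[OF x] k su_l md_l by simp
  then show ?thesis using True by (simp add: DmL_def preL_def pre_l)
next
  case False
  note pd = par_dep_nbr[OF x False]
  have xc: "x \<in> children (par x)" using x False by (simp add: children_def)
  have "gotv (hI t x) t (par x) 3 = penc (pre x) Dm"
    using G3[of t t] pd xc k by (intro gotv_eq) auto
  then show ?thesis using False P[OF x] k by (simp add: DmL_def preL_def)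
qed

lemma PC: assumes x: "x \<in> V" and k: "2 * Dm + 2 + dep x \<le> t" and c: "c \<in> children x"
  shows "preCh (iview t x) c = pre c"
proof -
  have ch: "chAt (iview t x) t = children x" using C[OF x] k by simp
  have g: "gotv (hI t x) t c' 2 = penc (size c') (md c')" if "c' \<in> children x" for c'
  proof -
    have "su c' \<le> 2 * Dm - dep c' + 2" using su_le childrenD[OF that] by blast
    moreover have "dep c' = dep x + 1" using childrenD[OF that] by simp
    moreover have "dep c' \<le> Dm" using childrenD[OF that] dep_le_Dm by blast
    ultimately have "su c' < t" using k by linarith
    then show ?thesis using gv2 that by blast
  qed
  have sm: "(\<Sum>c'\<in>{c' \<in> children x. c' < c}. fst (prod_decode (gotv (hI t x) t c' 2))) = (\<Sum>c'\<in>{c' \<in> children x. c' < c}. size c')"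
    by (rule sum.cong) (auto simp: g)
  have "preCh (iview t x) c = pre x + 1 + (\<Sum>c'\<in>{c' \<in> children x. c' < c}. size c')"
    unfolding preCh_def using KD[OF x k] ch sm by simp
  also have "\<dots> = pre c" using pre_rec childrenD[OF c] by simp
  finally show ?thesis .
qed

lemma LH: assumes x: "x \<in> V" and k: "4 * Dm + 4 - dep x \<le> t"
  shows "lowL (iview t x) = low x \<and> highL (iview t x) = high x \<and> bridgeL (iview t x) = bridge x"
proof -
  have dD: "dep x \<le> Dm" using dep_le_Dm[OF x] .
  have k2: "2 * Dm + 2 + dep x \<le> t" using k dD by simp
  have k3: "3 * Dm + 3 < t" using k dD by simp
  have sx: "su x \<le> t" using su_le[OF x] k dD by simp
  have ch: "chAt (iview t x) t = children x" using C[OF x] k2 by simp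
  have pl: "parL (iview t x) = par x" using P[OF x] k2 by simp
  have pr: "preL (iview t x) = pre x" using KD[OF x k2] by simp
  have g4: "gotv (hI t x) t y 4 = pre y" if "y \<in> nbrs E x" for y
    using G4[of t t] that k3 by (intro gotv_eq) auto
  have g5: "gotv (hI t x) t c 5 = penc (low c) (high c)" if "c \<in> children x" for c
  proof -
    have "4 * Dm + 4 - dep c < t" using childrenD[OF that] k dD by simp
    then show ?thesis using G5[of t t] childrenD[OF that] nbrs_sym by (intro gotv_eq) auto
  qed
  have i4: "(\<lambda>y. gotv (hI t x) t y 4) ` (nbrs E x - {par x}) = pre ` (nbrs E x - {par x})"
    by (rule image_cong) (auto simp: g4)
  have lo: "lowL (iview t x) = low x"
    unfolding lowL_def using ch pl pr i4 g5 low_rec[OF x] by (simp cong: image_cong)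
  have hi: "highL (iview t x) = high x"
    unfolding highL_def using ch pl pr i4 g5 high_rec[OF x] by (simp cong: image_cong)
  have "bridgeL (iview t x) = bridge x"
    unfolding bridgeL_def bridge_def using lo hi pr S[OF x sx] by simp
  then show ?thesis using lo hi by simp
qed

lemma LB: assumes x: "x \<in> V" and k: "4 * Dm + 5 + dep x \<le> t" shows "labL (iview t x) = lab x"
proof (cases "x = l")
  case True then show ?thesis by (simp add: labL_def lab_l)
next
  case False
  note pd = par_dep_nbr[OF x False]
  have xc: "x \<in> children (par x)" using x False by (simp add: children_def)
  have b: "bridgeL (iview t x) = bridge x" using LH[OF x] k by simp
  have pl: "parL (iview t x) = par x" using P[OF x] k by simp
  have g6: "gotv (hI t x) t (par x) 6 = lab (par x)"
    using G6[of t t] pd xc k by (intro gotv_eq) auto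
  show ?thesis using False b pl g6 lab_rec[OF x False] by (simp add: labL_def)
qed

lemma HL: assumes x: "x \<in> V" shows "haltedL (iview t x) \<longleftrightarrow> 5 * Dm + 5 \<le> t"
proof -
  have dD: "dep x \<le> Dm" using dep_le_Dm[OF x] .
  show ?thesis
  proof (cases "2 * Dm + 2 + dep x \<le> t")
    case True then show ?thesis using K[OF x] KD[OF x] by (simp add: haltedL_def)
  next
    case False then show ?thesis using K[OF x] dD by (simp add: haltedL_def)
  qed
qed


lemma MSG: assumes x: "x \<in> V" and v: "v \<in> nbrs E x" shows "msgL (iview t x) v = Ms t x v"
proof -
  define w where "w = iview t x"
  have vtw: "vt w = t" by (simp add: w_def)
  have dD: "dep x \<le> Dm" using dep_le_Dm[OF x] .
  have sg: "dep x + 2 \<le> su x" "su x \<le> 2 * Dm + 2" using su_ge[OF x] su_le[OF x] by auto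
  have F1: "(reachedAt w t \<and> t = depL w) = (t = dep x)"
    using R[OF x, of t t] D[OF x] unfolding w_def by auto
  have V1: "t = dep x \<Longrightarrow> (\<not> vlf w \<and> v = parL w) = (x \<noteq> l \<and> v = par x)"
    using P[OF x] unfolding w_def by auto
  have rr: "(readyAt w t \<and> \<not> readyAt w (t - 1)) = (t = su x)"
    using RD[OF x, of t t] RD[OF x, of "t - 1" t] sg unfolding w_def by auto
  have rr2: "readyAt w t \<Longrightarrow> reachedAt w t \<and> parL w = par x"
    using RD[OF x, of t t] R[OF x, of t t] P[OF x] sg unfolding w_def by auto
  have F2: "(\<not> vlf w \<and> reachedAt w t \<and> v = parL w \<and> readyAt w t \<and> \<not> readyAt w (t - 1)) = (x \<noteq> l \<and> v = par x \<and> t = su x)"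
    using rr rr2 by (auto simp: w_def)
  have V2: "t = su x \<Longrightarrow> sizeL w = size x" "t = su x \<Longrightarrow> mdL w = md x"
    using S[OF x] unfolding w_def by auto
  have kk: "knowsL w \<Longrightarrow> DmL w = Dm \<and> depL w = dep x \<and> chAt w t = children x \<and> parL w = par x \<and> preL w = pre x"
    using K[OF x] KD[OF x] D[OF x] C[OF x, of t t] P[OF x] unfolding w_def by auto
  have kw: "knowsL w = (2 * Dm + 2 + dep x \<le> t)" using K[OF x] unfolding w_def by simp
  have F3: "(knowsL w \<and> v \<in> chAt w t \<and> t = 2 * DmL w + 2 + depL w) = (v \<in> children x \<and> t = 2 * Dm + 2 + dep x)"
    using kk kw by auto
  have V3: "t = 2 * Dm + 2 + dep x \<Longrightarrow> v \<in> children x \<Longrightarrow> preCh w v = pre v"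
           "t = 2 * Dm + 2 + dep x \<Longrightarrow> DmL w = Dm"
    using PC[OF x] kk kw unfolding w_def by auto
  have F4: "(knowsL w \<and> t = 3 * DmL w + 3) = (t = 3 * Dm + 3)"
    using kk kw dD by auto
  have V4: "t = 3 * Dm + 3 \<Longrightarrow> preL w = pre x" using kk kw dD by auto
  have F5: "(\<not> vlf w \<and> knowsL w \<and> v = parL w \<and> t = 4 * DmL w + 4 - depL w) = (x \<noteq> l \<and> v = par x \<and> t = 4 * Dm + 4 - dep x)"
    using kk kw dD by (auto simp: w_def)
  have V5: "t = 4 * Dm + 4 - dep x \<Longrightarrow> lowL w = low x" "t = 4 * Dm + 4 - dep x \<Longrightarrow> highL w = high x"
    using LH[OF x] unfolding w_def by auto
  have F6: "(knowsL w \<and> v \<in> chAt w t \<and> t = 4 * DmL w + 5 + depL w) = (v \<in> children x \<and> t = 4 * Dm + 5 + dep x)"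
    using kk kw by auto
  have V6: "t = 4 * Dm + 5 + dep x \<Longrightarrow> labL w = lab x"
    using LB[OF x] unfolding w_def by auto
  have "msgL w v = Ms t x v"
    unfolding msgL_def Let_def vtw Ms_def
    by (simp only: F1 F2 F3 F4 F5 F6 V1 V2 V3 V4 V5 V6 simp_thms cong: if_cong)
  then show ?thesis by (simp add: w_def)
qed


end

type_synonym vw = "nat \<times> bool \<times> nat list \<times> nat \<times> (nat \<times> nat \<times> nat) list"

definition enc :: "vw \<Rightarrow> nat list" where "enc w = [to_nat w]"
definition dec :: "nat list \<Rightarrow> vw" where "dec s = from_nat (hd s)"

lemma dec_enc[simp]: "dec (enc w) = w" by (simp add: enc_def dec_def)

definition rcv :: "(nat \<times> nat \<times> nat) list \<Rightarrow> nat \<Rightarrow> nat \<Rightarrow> nat option" where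
  "rcv lg r y = (if \<exists>m. (r,y,m) \<in> set lg then Some (THE m. (r,y,m) \<in> set lg) else None)"

definition tov :: "vw \<Rightarrow> lview" where
  "tov w = (case w of (i,lf,ns,t,lg) \<Rightarrow> \<lparr>vi = i, vlf = lf, vN = set ns, vt = t, vh = rcv lg\<rparr>)"

definition stepv :: "vw \<Rightarrow> (nat \<Rightarrow> nat option) \<Rightarrow> vw" where
  "stepv w r = (case w of (i,lf,ns,t,lg) \<Rightarrow> (i, lf, ns, Suc t, lg @ map (\<lambda>y. (t, y, the (r y))) (filter (\<lambda>y. r y \<noteq> None) ns)))"

definition Alg :: alg where
  "Alg = \<lparr>init = (\<lambda>i N lf. enc (i, lf, sorted_list_of_set N, 0, [])),
          msg = (\<lambda>s v. msgL (tov (dec s)) v),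
          trans = (\<lambda>s r. enc (stepv (dec s) r)),
          halted = (\<lambda>s. haltedL (tov (dec s))),
          out = (\<lambda>s. labL (tov (dec s)))\<rparr>"

lemma run_halted: "halted A (run A E l n v) \<Longrightarrow> run A E l (Suc n) v = run A E l n v"
  by (simp add: Let_def)

context G begin

definition nsl :: "nat \<Rightarrow> nat list" where "nsl x = sorted_list_of_set (nbrs E x)"

lemma set_nsl[simp]: "set (nsl x) = nbrs E x" using fin_nbrs by (simp add: nsl_def)

primrec ilog :: "nat \<Rightarrow> nat \<Rightarrow> (nat \<times> nat \<times> nat) list" where
  "ilog 0 x = []"
| "ilog (Suc t) x = ilog t x @ map (\<lambda>y. (t, y, the (Ms t y x))) (filter (\<lambda>y. Ms t y x \<noteq> None) (nsl x))"

lemma set_ilog: "(r,y,m) \<in> set (ilog t x) \<longleftrightarrow> r < t \<and> y \<in> nbrs E x \<and> Ms r y x = Some m"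
  by (induct t) (auto simp: less_Suc_eq)

lemma rcv_ilog: "rcv (ilog t x) = hI t x"
proof (intro ext)
  fix r y
  show "rcv (ilog t x) r y = hI t x r y"
  proof (cases "r < t \<and> y \<in> nbrs E x \<and> Ms r y x \<noteq> None")
    case True
    then obtain m where m: "Ms r y x = Some m" by blast
    then have "(THE m. (r,y,m) \<in> set (ilog t x)) = m" using True by (auto simp: set_ilog)
    then show ?thesis using True m by (auto simp: rcv_def hI_def set_ilog)
  next
    case False then show ?thesis by (auto simp: rcv_def hI_def set_ilog)
  qed
qed

lemma tov_i: "tov (x, x = l, nsl x, t, ilog t x) = iview t x"
  by (simp add: tov_def iview_def rcv_ilog)

abbreviation H :: nat where "H \<equiv> 5 * Dm + 5"

lemma sim: "t \<le> H \<Longrightarrow> v \<in> V \<Longrightarrow> run Alg E l t v = enc (v, v = l, nsl v, t, ilog t v)"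
proof (induct t arbitrary: v)
  case 0 then show ?case by (simp add: Alg_def nsl_def)
next
  case (Suc t)
  have IH: "\<And>u. u \<in> V \<Longrightarrow> run Alg E l t u = enc (u, u = l, nsl u, t, ilog t u)" using Suc by simp
  have nh: "\<And>u. u \<in> V \<Longrightarrow> \<not> halted Alg (run Alg E l t u)"
    using IH HL Suc.prems by (simp add: Alg_def tov_i)
  have ms: "\<And>u. u \<in> nbrs E v \<Longrightarrow> msg Alg (run Alg E l t u) v = Ms t u v"
    using IH MSG nbrs_sym nbrs_V by (simp add: Alg_def tov_i)
  let ?r = "\<lambda>u. if u \<in> nbrs E v \<and> \<not> halted Alg (run Alg E l t u) then msg Alg (run Alg E l t u) v else None"
  have r: "\<And>u. u \<in> nbrs E v \<Longrightarrow> ?r u = Ms t u v" using nh ms nbrs_V by simp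
  have "run Alg E l (Suc t) v = trans Alg (run Alg E l t v) ?r"
    using nh[OF Suc.prems(2)] by (simp add: Let_def)
  also have "\<dots> = enc (v, v = l, nsl v, Suc t, ilog t v @ map (\<lambda>y. (t, y, the (?r y))) (filter (\<lambda>y. ?r y \<noteq> None) (nsl v)))"
    using IH[OF Suc.prems(2)] by (simp add: Alg_def stepv_def)
  also have "map (\<lambda>y. (t, y, the (?r y))) (filter (\<lambda>y. ?r y \<noteq> None) (nsl v))
     = map (\<lambda>y. (t, y, the (Ms t y v))) (filter (\<lambda>y. Ms t y v \<noteq> None) (nsl v))"
  proof -
    have "filter (\<lambda>y. ?r y \<noteq> None) (nsl v) = filter (\<lambda>y. Ms t y v \<noteq> None) (nsl v)"
      using r by (intro filter_cong) auto
    moreover have "map (\<lambda>y. (t, y, the (?r y))) (filter (\<lambda>y. Ms t y v \<noteq> None) (nsl v))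
       = map (\<lambda>y. (t, y, the (Ms t y v))) (filter (\<lambda>y. Ms t y v \<noteq> None) (nsl v))"
      using r by (intro map_cong) auto
    ultimately show ?thesis by simp
  qed
  finally show ?case by simp
qed

lemma halted_H: "v \<in> V \<Longrightarrow> halted Alg (run Alg E l H v)"
  using sim[of H v] HL by (simp add: Alg_def tov_i)

lemma frozen: "v \<in> V \<Longrightarrow> run Alg E l (H + k) v = run Alg E l H v"
proof (induct k arbitrary: v)
  case 0 then show ?case by simp
next
  case (Suc k)
  then have "halted Alg (run Alg E l (H + k) v)" using halted_H by simp
  then have "run Alg E l (Suc (H + k)) v = run Alg E l (H + k) v" by (rule run_halted)
  then show ?case using Suc unfolding add_Suc_right by simp
qed

lemma sent_eq: "{u,v} \<in> E \<Longrightarrow> sent Alg E l t v u = (if t < H then Ms t v u else None)"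
proof -
  assume e: "{u,v} \<in> E"
  then have v: "v \<in> V" and u: "u \<in> nbrs E v" using edge_V by (auto simp: nbrs_def)
  show ?thesis
  proof (cases "t < H")
    case True
    then have "run Alg E l t v = enc (v, v = l, nsl v, t, ilog t v)" using sim v by simp
    then show ?thesis using True e HL[OF v] MSG[OF v u] by (simp add: sent_def Alg_def tov_i)
  next
    case False
    then obtain k where "t = H + k" by (metis le_add_diff_inverse not_less)
    then show ?thesis using frozen[OF v] halted_H[OF v] False by (simp add: sent_def)
  qed
qed

lemma sent_none: "{u,v} \<notin> E \<Longrightarrow> sent Alg E l t v u = None"
  by (simp add: sent_def)

lemma out_H: "v \<in> V \<Longrightarrow> out Alg (run Alg E l H v) = lab v"
  using sim[of H v] LB[of v H] dep_le_Dm[of v] by (simp add: Alg_def tov_i)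

end

lemma penc_lt: "penc a b < (a + b + 1)^2"
proof -
  let ?s = "a + b"
  have "triangle ?s \<le> ?s * Suc ?s" unfolding triangle_def by (rule div_le_dividend)
  then have "prod_encode (a, b) \<le> ?s * Suc ?s + ?s" unfolding prod_encode_def by simp
  also have "\<dots> < Suc ?s * Suc ?s" by simp
  finally show ?thesis by (simp add: power2_eq_square)
qed

lemma pair_bound: "a < N \<Longrightarrow> b < N \<Longrightarrow> penc a b < 4 * N^2"
proof -
  assume "a < N" "b < N"
  then have "a + b + 1 \<le> 2 * N" by simp
  then have "(a + b + 1)^2 \<le> (2 * N)^2" by (rule power_mono) simp
  then show ?thesis using penc_lt[of a b] by (simp add: power_mult_distrib)
qed

lemma msg_bound: "k \<le> 6 \<Longrightarrow> p < 4 * N^2 \<Longrightarrow> 3 \<le> N \<Longrightarrow> penc k p < N^10"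
proof -
  assume k: "k \<le> 6" and p: "p < 4 * N^2" and N: "3 \<le> N"
  have "9 \<le> N^2" using power_mono[OF N, of 2] by simp
  then have "k + p + 1 \<le> 5 * N^2" using k p by simp
  then have "(k + p + 1)^2 \<le> (5 * N^2)^2" by (rule power_mono) simp
  also have "\<dots> = 25 * N^4" by (simp add: power_mult_distrib power_mult[symmetric])
  also have "\<dots> \<le> N^6 * N^4"
  proof -
    have "729 \<le> N^6" using power_mono[OF N, of 6] by simp
    then have "25 \<le> N^6" by simp
    then show ?thesis by (rule mult_right_mono) simp
  qed
  also have "\<dots> = N^10" by (simp only: power_add[symmetric]) simp
  finally show ?thesis using penc_lt[of k p] by simp
qed

lemma card_Un6: "card (A \<union> B \<union> C \<union> D \<union> F \<union> G6) \<le> card A + card B + card C + card D + card F + card G6"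
  using card_Un_le[of "A \<union> B \<union> C \<union> D \<union> F" G6] card_Un_le[of "A \<union> B \<union> C \<union> D" F]
    card_Un_le[of "A \<union> B \<union> C" D] card_Un_le[of "A \<union> B" C] card_Un_le[of A B] by linarith

context G begin

lemma le_MaxV: "x \<in> V \<Longrightarrow> x \<le> Max V" using finV by simp

lemma Dm_lt: "Dm < card V"
proof -
  have "Dm \<in> dep ` V" unfolding Dm_def using finV ne by (intro Max_in) auto
  then show ?thesis using dep_le_card by auto
qed

lemma size_le: "size s \<le> card V" unfolding size_def using sub_V finV by (rule card_mono[rotated])

lemma Ms_bound: assumes v: "v \<in> V" and m: "Ms t v u = Some m"
  shows "m < (card V + Max V + 2) ^ 10"
proof -
  let ?N = "card V + Max V + 2"
  have N3: "3 \<le> ?N" using finV ne by (simp add: Suc_le_eq card_gt_0_iff)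
  have sN: "\<And>a. a < card V \<Longrightarrow> a < ?N" by simp
  have s4: "\<And>a. a < ?N \<Longrightarrow> a < 4 * ?N^2"
  proof -
    fix a assume "a < ?N"
    moreover have "?N \<le> 4 * ?N^2" by (simp add: power2_eq_square)
    ultimately show "a < 4 * ?N^2" by linarith
  qed
  have dn: "Dm < ?N" using Dm_lt by simp
  have fields: "size v < ?N" "md v < ?N" "pre v < ?N" "low v < ?N" "high v < ?N" "lab v < ?N"
    using size_le[of v] md_le_Dm[OF v] Dm_lt pre_lt[OF v] low_lt[OF v] high_lt[OF v]
      le_MaxV[OF lab_V[OF v]] by linarith+
  have pu: "u \<in> children v \<Longrightarrow> pre u < ?N" using pre_lt childrenD by fastforce
  have "\<exists>k p. m = penc k p \<and> k \<le> 6 \<and> p < 4 * ?N^2"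
    using m unfolding Ms_def
    using fields pu dn s4 pair_bound[of _ ?N] N3
    by (auto split: if_splits intro!: exI)
  then show ?thesis using msg_bound N3 by blast
qed

lemma card_Pp: "finite {(v,u). {u,v} \<in> E} \<and> card {(v,u). {u,v} \<in> E} \<le> 2 * card E"
proof -
  let ?Q = "\<lambda>e. {(v,u). {u,v} = e}"
  have sub: "{(v,u). {u,v} \<in> E} \<subseteq> (\<Union>e\<in>E. ?Q e)" by auto
  have each: "finite (?Q e) \<and> card (?Q e) \<le> 2" if e: "e \<in> E" for e
  proof -
    obtain a b where ab: "e = {a,b}" using edgeE[OF e] by blast
    have "?Q e \<subseteq> {(a,b),(b,a)}" using ab by (auto simp: doubleton_eq_iff)
    moreover have "card {(a,b),(b,a)} \<le> 2" by (simp add: card_insert_le_m1)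
    moreover have "finite {(a,b),(b,a)}" by simp
    ultimately show ?thesis using card_mono[of "{(a,b),(b,a)}" "?Q e"] finite_subset[of "?Q e" "{(a,b),(b,a)}"] by linarith
  qed
  have fin: "finite (\<Union>e\<in>E. ?Q e)" using finE each by blast
  have "card {(v,u). {u,v} \<in> E} \<le> card (\<Union>e\<in>E. ?Q e)" using fin sub by (rule card_mono)
  also have "\<dots> \<le> (\<Sum>e\<in>E. card (?Q e))" by (rule card_UN_le[OF finE])
  also have "\<dots> \<le> (\<Sum>e\<in>E. 2)" using each by (intro sum_mono) auto
  finally show ?thesis using fin sub finite_subset by auto
qed

lemma card_W: "card (V - {l}) \<le> card E"
proof (rule card_inj_on_le[OF _ _ finE])
  show "inj_on (\<lambda>v. {par v, v}) (V - {l})" using tree_edge_inj by (auto intro!: inj_onI)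
  show "(\<lambda>v. {par v, v}) ` (V - {l}) \<subseteq> E" using par by auto
qed

lemma count: "(\<Sum>t<H. msgs_in_round Alg E l t) \<le> 8 * card E"
proof -
  let ?P = "{(v,u). {u,v} \<in> E}" and ?W = "V - {l}"
  let ?S = "\<lambda>t. {(v,u). {u,v} \<in> E \<and> Ms t v u \<noteq> None}"
  have mr: "msgs_in_round Alg E l t = card (?S t)" if "t < H" for t
  proof -
    have "sent Alg E l t v u \<noteq> None \<longleftrightarrow> {u,v} \<in> E \<and> Ms t v u \<noteq> None" for v u
      by (cases "{u,v} \<in> E") (simp_all add: sent_eq sent_none that)
    then have "{(v,u). sent Alg E l t v u \<noteq> None} = ?S t" by auto
    then show ?thesis by (simp add: msgs_in_round_def)
  qed
  have finP: "finite ?P" using card_Pp by blast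
  have finS: "\<And>t. finite (?S t)" by (rule finite_subset[OF _ finP]) auto
  have "(\<Sum>t<H. msgs_in_round Alg E l t) = (\<Sum>t<H. card (?S t))" using mr by simp
  also have "\<dots> = card (SIGMA t:{..<H}. ?S t)" using finS by (simp add: card_SigmaI)
  also have "\<dots> \<le> card ((\<lambda>(v,u). (dep v, (v,u))) ` ?P \<union> (\<lambda>(v,u). (3 * Dm + 3, (v,u))) ` ?P
      \<union> (\<lambda>v. (su v, (v, par v))) ` ?W \<union> (\<lambda>v. (4 * Dm + 4 - dep v, (v, par v))) ` ?W
      \<union> (\<lambda>c. (2 * Dm + 2 + dep (par c), (par c, c))) ` ?W \<union> (\<lambda>c. (4 * Dm + 5 + dep (par c), (par c, c))) ` ?W)"
    (is "_ \<le> card ?U")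
  proof (rule card_mono)
    show "finite ?U" using finP finV by auto
    show "(SIGMA t:{..<H}. ?S t) \<subseteq> ?U"
    proof
      fix z assume "z \<in> (SIGMA t:{..<H}. ?S t)"
      then obtain t v u where z: "z = (t,(v,u))" "{u,v} \<in> E" "Ms t v u \<noteq> None" by auto
      have vV: "v \<in> V" using z(2) edge_V by blast
      have pv: "(v,u) \<in> ?P" using z(2) by simp
      show "z \<in> ?U"
      proof (cases "t = dep v")
        case True
        have "z \<in> (\<lambda>(v,u). (dep v, (v,u))) ` ?P" by (rule rev_image_eqI[OF pv]) (simp add: z True)
        then show ?thesis by blast
      next
        case n1: False
        show ?thesis
        proof (cases "v \<noteq> l \<and> u = par v \<and> t = su v")
          case True
          then have "v \<in> ?W" using vV by simp
          then have "z \<in> (\<lambda>v. (su v, (v, par v))) ` ?W" by (rule rev_image_eqI) (simp add: z True)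
          then show ?thesis by blast
        next
          case n2: False
          show ?thesis
          proof (cases "u \<in> children v \<and> t = 2 * Dm + 2 + dep v")
            case True
            then have "u \<in> ?W" "par u = v" using childrenD[of u v] by auto
            then have "z \<in> (\<lambda>c. (2 * Dm + 2 + dep (par c), (par c, c))) ` ?W" by (intro rev_image_eqI) (auto simp: z True)
            then show ?thesis by blast
          next
            case n3: False
            show ?thesis
            proof (cases "t = 3 * Dm + 3")
              case True
              have "z \<in> (\<lambda>(v,u). (3 * Dm + 3, (v,u))) ` ?P" by (rule rev_image_eqI[OF pv]) (simp add: z True)
              then show ?thesis by blast
            next
              case n4: False
              show ?thesis
              proof (cases "v \<noteq> l \<and> u = par v \<and> t = 4 * Dm + 4 - dep v")
                case True
                then have "v \<in> ?W" using vV by simp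
                then have "z \<in> (\<lambda>v. (4 * Dm + 4 - dep v, (v, par v))) ` ?W" by (rule rev_image_eqI) (simp add: z True)
                then show ?thesis by blast
              next
                case n5: False
                then have "u \<in> children v \<and> t = 4 * Dm + 5 + dep v"
                  using z(3) n1 n2 n3 n4 unfolding Ms_def by (auto split: if_splits)
                then have "u \<in> ?W" "par u = v" "t = 4 * Dm + 5 + dep v" using childrenD[of u v] by auto
                then have "z \<in> (\<lambda>c. (4 * Dm + 5 + dep (par c), (par c, c))) ` ?W" by (intro rev_image_eqI) (auto simp: z)
                then show ?thesis by blast
              qed
            qed
          qed
        qed
      qed
    qed
  qed
  also have "\<dots> \<le> card ?P + card ?P + card ?W + card ?W + card ?W + card ?W"
  proof -
    have fW: "finite ?W" using finV by simp
    show ?thesis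
      by (rule order_trans[OF card_Un6], intro add_mono card_image_le finP fW)
  qed
  also have "\<dots> \<le> 8 * card E" using card_Pp card_W by linarith
  finally show ?thesis .
qed

lemma Dm_diam: "Dm \<le> diam V E"
proof -
  have eq: "{dist E u v |u v. u \<in> V \<and> v \<in> V} = (\<lambda>(u,v). dist E u v) ` (V \<times> V)" by auto
  have fin: "finite {dist E u v |u v. u \<in> V \<and> v \<in> V}" unfolding eq using finV by simp
  have "Dm \<in> dep ` V" unfolding Dm_def using finV ne by (intro Max_in) auto
  then obtain x where x: "x \<in> V" "Dm = dist E l x" by (auto simp: dep_def)
  then have "Dm \<in> {dist E u v |u v. u \<in> V \<and> v \<in> V}" using lV by blast
  then show ?thesis unfolding diam_def using fin by simp
qed

lemma main_loc: "(\<forall>t v u x. sent Alg E l t v u = Some x \<longrightarrow> x < (card V + Max V + 2) ^ 10) \<and>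
    (\<exists>T. T \<le> 10 * (diam V E + 1) \<and>
         (\<forall>v\<in>V. halted Alg (run Alg E l T v)) \<and>
         (\<Sum>t<T. msgs_in_round Alg E l t) \<le> 10 * card E \<and>
         (\<forall>u\<in>V. \<forall>v\<in>V. out Alg (run Alg E l T u) = out Alg (run Alg E l T v)
                          \<longleftrightarrow> edge_biconn V E u v))"
proof (intro conjI allI impI exI[of _ H] ballI)
  fix t v u x assume s: "sent Alg E l t v u = Some x"
  then have e: "{u,v} \<in> E" using sent_none by fastforce
  then have "v \<in> V" using edge_V by blast
  moreover have "Ms t v u = Some x" using s sent_eq[OF e] by (simp split: if_splits)
  ultimately show "x < (card V + Max V + 2) ^ 10" by (rule Ms_bound)
next
  show "H \<le> 10 * (diam V E + 1)" using Dm_diam by simp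
next
  fix v assume "v \<in> V" then show "halted Alg (run Alg E l H v)" by (rule halted_H)
next
  show "(\<Sum>t<H. msgs_in_round Alg E l t) \<le> 10 * card E" using count by simp
next
  fix u v assume "u \<in> V" "v \<in> V"
  then show "out Alg (run Alg E l H u) = out Alg (run Alg E l H v) \<longleftrightarrow> edge_biconn V E u v"
    using out_H lab_correct by simp
qed

end

theorem mainTheorem1:
  shows "\<exists>(A::alg) (c::nat). \<forall>V E l.
    simple_graph V E \<and> V \<noteq> {} \<and> connected_graph V E \<and> l \<in> V \<longrightarrow>
    (\<forall>t v u x. sent A E l t v u = Some x \<longrightarrow> x < (card V + Max V + 2) ^ c) \<and>
    (\<exists>T. T \<le> c * (diam V E + 1) \<and>
         (\<forall>v\<in>V. halted A (run A E l T v)) \<and>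
         (\<Sum>t<T. msgs_in_round A E l t) \<le> c * card E \<and>
         (\<forall>u\<in>V. \<forall>v\<in>V. out A (run A E l T u) = out A (run A E l T v)
                          \<longleftrightarrow> edge_biconn V E u v))"
proof (intro exI[of _ Alg] exI[of _ 10] allI impI)
  fix V E l assume a: "simple_graph V E \<and> V \<noteq> {} \<and> connected_graph V E \<and> l \<in> V"
  interpret G V E l using a by unfold_locales auto
  show "(\<forall>t v u x. sent Alg E l t v u = Some x \<longrightarrow> x < (card V + Max V + 2) ^ 10) \<and>
    (\<exists>T. T \<le> 10 * (diam V E + 1) \<and>
         (\<forall>v\<in>V. halted Alg (run Alg E l T v)) \<and>
         (\<Sum>t<T. msgs_in_round Alg E l t) \<le> 10 * card E \<and>
         (\<forall>u\<in>V. \<forall>v\<in>V. out Alg (run Alg E l T u) = out Alg (run Alg E l T v)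
                          \<longleftrightarrow> edge_biconn V E u v))" by (rule main_loc)
qed

end
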